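(* The Margolis homology groups $M_*(S';Q_0)$ and $M_*(S';Q_1)$ are both trivial. Consequently, $S'$ is a free $E(1)$-module.
   Context: Let $p$ be an odd prime and $(A/\!/E(2))_*=\mathbb{F}_p[\zeta_1,\zeta_2,\ldots]\otimes E(\overline{\tau}_3,\overline{\tau}_4,\ldots)$ (subalgebra of the mod $p$ dual Steenrod algebra; $\zeta_n,\overline{\tau}_n$ are the conjugates of Milnor's $\xi_n,\tau_n$, of degrees $2(p^n-1)$ and $2p^n-1$). It is a module over $E(2)=E(Q_0,Q_1,Q_2)$ (Milnor primitives), each $Q_i$ acting as a graded derivation with $Q_i\zeta_n=0$ and, for $k\geq1$, $Q_0\overline{\tau}_{2+k}=\zeta_{2+k}$, $Q_1\overline{\tau}_{2+k}=\zeta_{1+k}^p$, $Q_2\overline{\tau}_{2+k}=\zeta_k^{p^2}$. The length of a monomial is the number of $\overline{\tau}_n$'s in it. Let $S$ be the $E(2)$-submodule generated by monomials of length $\geq3$ and $Q=(A/\!/E(2))_*/S$, with the length filtration induced from $(A/\!/E(2))_*$ (so elements of $Q$ have lengths $0,1,2$). Let $E(1)=E(Q_0,Q_1)\subseteq E(2)$ and let $S'$ be the $E(1)$-submodule of $Q$ generated by the elements of length $2$. Margolis homology is $M_*(N;Q_i)=\ker(Q_i)/\operatorname{im}(Q_i)$. *)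

theory Defs
  imports Main "HOL-Library.Function_Algebras" "Berlekamp_Zassenhaus.Finite_Field"
begin

text \<open>A monomial zeta_1^(e 1) zeta_2^(e 2) ... taubar_{t1} ... taubar_{tk} (t1 < ... < tk)
 is encoded as the pair (e, T) with T = {t1,...,tk}.\<close>
type_synonym mon = "(nat \<Rightarrow> nat) \<times> nat set"

definition valid_mon :: "mon \<Rightarrow> bool" where
  "valid_mon m \<longleftrightarrow> finite {n. fst m n \<noteq> 0} \<and> fst m 0 = 0 \<and> finite (snd m) \<and> snd m \<subseteq> {3..}"

definition mlen :: "mon \<Rightarrow> nat" where
  "mlen m = card (snd m)"

definition mdeg :: "nat \<Rightarrow> mon \<Rightarrow> nat" where
  "mdeg p m = (\<Sum>n\<in>{n. fst m n \<noteq> 0}. fst m n * (2 * (p ^ n - 1))) + (\<Sum>n\<in>snd m. 2 * p ^ n - 1)"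

text \<open>Elements of (A//E(2))_* are finitely supported coefficient functions mon => F_p.\<close>
definition basis_vec :: "mon \<Rightarrow> mon \<Rightarrow> 'a::comm_ring_1" where
  "basis_vec m = (\<lambda>m'. if m' = m then 1 else 0)"

definition smul :: "'a::comm_ring_1 \<Rightarrow> (mon \<Rightarrow> 'a) \<Rightarrow> (mon \<Rightarrow> 'a)" where
  "smul c f = (\<lambda>m. c * f m)"

definition homogeneous :: "nat \<Rightarrow> (mon \<Rightarrow> 'a::comm_ring_1) \<Rightarrow> bool" where
  "homogeneous p f \<longleftrightarrow> (\<exists>d. \<forall>m. f m \<noteq> 0 \<longrightarrow> mdeg p m = d)"

text \<open>Q_j on a monomial, as a graded derivation with Q_j zeta_n = 0 and
 Q_j taubar_n = zeta_{n-j}^{p^j} (n >= 3, j <= 2); the sign (-1)^r comes from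
 moving Q_j past the r taubar's preceding taubar_t.\<close>
definition Qmon :: "nat \<Rightarrow> nat \<Rightarrow> mon \<Rightarrow> (mon \<Rightarrow> 'a::comm_ring_1)" where
  "Qmon p j m = (\<Sum>t\<in>snd m. smul ((-1) ^ card {s\<in>snd m. s < t})
      (basis_vec ((fst m)(t - j := fst m (t - j) + p ^ j), snd m - {t})))"

definition Qop :: "nat \<Rightarrow> nat \<Rightarrow> (mon \<Rightarrow> 'a::comm_ring_1) \<Rightarrow> (mon \<Rightarrow> 'a)" where
  "Qop p j f = (\<Sum>m\<in>{m. f m \<noteq> 0}. smul (f m) (Qmon p j m))"

definition Qseq :: "nat \<Rightarrow> nat set \<Rightarrow> (mon \<Rightarrow> 'a::comm_ring_1) \<Rightarrow> (mon \<Rightarrow> 'a)" where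
  "Qseq p I f = foldr (Qop p) (sorted_list_of_set I) f"

definition Ssub :: "nat \<Rightarrow> (mon \<Rightarrow> 'a::comm_ring_1) set" where
  "Ssub p = module.span smul
     {Qseq p I (basis_vec m) | I m. I \<subseteq> {0,1,2} \<and> valid_mon m \<and> 3 \<le> mlen m}"

text \<open>Preimage in (A//E(2))_* of S' (the E(1)-submodule of Q = A/S generated by
 the classes of the length-2 monomials); so S' = Sprime_pre p / Ssub p.\<close>
definition Sprime_pre :: "nat \<Rightarrow> (mon \<Rightarrow> 'a::comm_ring_1) set" where
  "Sprime_pre p = module.span smul
     ({Qseq p I (basis_vec m) | I m. I \<subseteq> {0,1} \<and> valid_mon m \<and> mlen m = 2} \<union> Ssub p)"

text \<open>M_*(W/S; Q_i) = 0, i.e. ker Q_i = im Q_i on the subquotient W/S.\<close>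
definition margolis_trivial :: "nat \<Rightarrow> nat \<Rightarrow> (mon \<Rightarrow> 'a::comm_ring_1) set \<Rightarrow> (mon \<Rightarrow> 'a) set \<Rightarrow> bool" where
  "margolis_trivial p i W S \<longleftrightarrow>
     (\<forall>x\<in>W. Qop p i x \<in> S \<longrightarrow> (\<exists>y\<in>W. x - Qop p i y \<in> S))"

text \<open>W/S is a free (graded) E(1)-module: there are homogeneous b in W whose classes
 form an E(1)-basis, i.e. the classes of Q^I b (b in B, I subset of {0,1}) are
 linearly independent and span W/S.\<close>
definition E1_free :: "nat \<Rightarrow> (mon \<Rightarrow> 'a::comm_ring_1) set \<Rightarrow> (mon \<Rightarrow> 'a) set \<Rightarrow> bool" where
  "E1_free p W S \<longleftrightarrow> (\<exists>B. B \<subseteq> W \<and> (\<forall>b\<in>B. homogeneous p b) \<and>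
     W \<subseteq> module.span smul ({Qseq p I b | I b. I \<subseteq> {0,1} \<and> b \<in> B} \<union> S) \<and>
     (\<forall>c F. finite F \<and> F \<subseteq> B \<times> Pow {0,1} \<and>
        (\<Sum>(b,I)\<in>F. smul (c (b,I)) (Qseq p I b)) \<in> S \<longrightarrow> (\<forall>x\<in>F. c x = 0)))"

end

theory Submission
  imports Defs
begin


lemma sum_fun_at: "(\<Sum>i\<in>A. F i) x = (\<Sum>i\<in>A. F i x)"
  by (induct A rule: infinite_finite_induct) (auto simp: plus_fun_def zero_fun_def)

lemma module_smul: "Modules.module (smul :: 'a::comm_ring_1 \<Rightarrow> (mon \<Rightarrow> 'a) \<Rightarrow> _)"
  by unfold_locales (auto simp: smul_def fun_eq_iff algebra_simps)

lemma vs_smul: "vector_space (smul :: 'a::field \<Rightarrow> (mon \<Rightarrow> 'a) \<Rightarrow> _)"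
  using module_smul Vector_Spaces.module_iff_vector_space by blast

definition supp :: "(mon \<Rightarrow> 'a::comm_ring_1) \<Rightarrow> mon set" where
  "supp f = {m. f m \<noteq> 0}"

definition fs :: "(mon \<Rightarrow> 'a::comm_ring_1) \<Rightarrow> bool" where
  "fs f \<longleftrightarrow> finite (supp f)"

lemma smul_apply: "smul c f m = c * f m" by (simp add: smul_def)
lemma basis_apply: "basis_vec m m' = (if m' = m then 1 else 0)" by (simp add: basis_vec_def)

lemma smul_zero[simp]: "smul 0 f = 0" "smul c 0 = 0" by (auto simp: smul_def fun_eq_iff)
lemma smul_one[simp]: "smul 1 f = f" by (auto simp: smul_def fun_eq_iff)
lemma smul_add: "smul c (f + g) = smul c f + smul c g" "smul (a + b) f = smul a f + smul b f"
  by (auto simp: smul_def fun_eq_iff algebra_simps)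
lemma smul_smul[simp]: "smul a (smul b f) = smul (a*b) f" by (auto simp: smul_def fun_eq_iff)
lemma smul_neg: "smul c (- f) = - smul c f" "smul (-c) f = - smul c f"
  by (auto simp: smul_def fun_eq_iff)
lemma smul_diff: "smul c (f - g) = smul c f - smul c g"
  by (auto simp: smul_def fun_eq_iff algebra_simps)
lemma smul_sum: "smul c (\<Sum>i\<in>A. F i) = (\<Sum>i\<in>A. smul c (F i))"
  by (rule ext) (simp add: sum_fun_at smul_def sum_distrib_left)
lemma smul_sum_left: "smul (\<Sum>i\<in>A. F i) f = (\<Sum>i\<in>A. smul (F i) f)"
  by (rule ext) (simp add: sum_fun_at smul_def sum_distrib_right)

lemma fs_zero[simp]: "fs 0" by (simp add: fs_def supp_def)
lemma fs_basis[simp]: "fs (basis_vec m)"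
  by (simp add: fs_def supp_def basis_vec_def)
lemma fs_add[simp]: "fs f \<Longrightarrow> fs g \<Longrightarrow> fs (f + g)"
  unfolding fs_def supp_def by (rule finite_subset[of _ "{m. f m \<noteq> 0} \<union> {m. g m \<noteq> 0}"]) auto
lemma fs_smul[simp]: "fs f \<Longrightarrow> fs (smul c f)"
  unfolding fs_def supp_def by (rule finite_subset[of _ "{m. f m \<noteq> 0}"]) (auto simp: smul_apply)
lemma fs_neg[simp]: "fs f \<Longrightarrow> fs (- f)"
  unfolding fs_def supp_def by simp
lemma fs_diff[simp]: "fs f \<Longrightarrow> fs g \<Longrightarrow> fs (f - g)"
  unfolding fs_def supp_def by (rule finite_subset[of _ "{m. f m \<noteq> 0} \<union> {m. g m \<noteq> 0}"]) auto
lemma fs_sum: "(\<And>i. i \<in> A \<Longrightarrow> fs (F i)) \<Longrightarrow> fs (\<Sum>i\<in>A. F i)"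
  by (induct A rule: infinite_finite_induct) auto

definition lin :: "(mon \<Rightarrow> (mon \<Rightarrow> 'a::comm_ring_1)) \<Rightarrow> (mon \<Rightarrow> 'a) \<Rightarrow> (mon \<Rightarrow> 'a)" where
  "lin G f = (\<Sum>m\<in>{m. f m \<noteq> 0}. smul (f m) (G m))"

lemma Qop_lin: "Qop p j = lin (Qmon p j)"
  by (simp add: fun_eq_iff Qop_def lin_def)

lemma lin_eq: assumes "finite A" "supp f \<subseteq> A"
  shows "lin G f = (\<Sum>m\<in>A. smul (f m) (G m))"
  unfolding lin_def using assms by (intro sum.mono_neutral_left) (auto simp: supp_def)

lemma lin_add: assumes "fs f" "fs g" shows "lin G (f + g) = lin G f + lin G g"
proof -
  let ?A = "supp f \<union> supp g"
  have A: "finite ?A" using assms by (simp add: fs_def)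
  have "lin G (f + g) = (\<Sum>m\<in>?A. smul ((f+g) m) (G m))"
    by (rule lin_eq[OF A]) (auto simp: supp_def)
  also have "\<dots> = (\<Sum>m\<in>?A. smul (f m) (G m)) + (\<Sum>m\<in>?A. smul (g m) (G m))"
    by (simp add: smul_add sum.distrib)
  also have "\<dots> = lin G f + lin G g"
    using lin_eq[OF A, of f G] lin_eq[OF A, of g G] by auto
  finally show ?thesis .
qed

lemma lin_smul: assumes "fs f" shows "lin G (smul c f) = smul c (lin G f)"
proof -
  have A: "finite (supp f)" using assms by (simp add: fs_def)
  have "lin G (smul c f) = (\<Sum>m\<in>supp f. smul (smul c f m) (G m))"
    by (rule lin_eq[OF A]) (auto simp: supp_def smul_apply)
  also have "\<dots> = (\<Sum>m\<in>supp f. smul c (smul (f m) (G m)))" by (simp add: smul_apply)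
  also have "\<dots> = smul c (lin G f)" using A by (simp add: lin_eq smul_sum)
  finally show ?thesis .
qed

lemma lin_zero[simp]: "lin G 0 = 0" by (simp add: lin_def)

lemma lin_basis[simp]: "lin G (basis_vec m) = G m"
  by (subst lin_eq[of "{m}"]) (auto simp: supp_def basis_vec_def)

lemma fs_lin: assumes "fs f" "\<And>m. m \<in> supp f \<Longrightarrow> fs (G m)" shows "fs (lin G f)"
  unfolding lin_def using assms by (intro fs_sum fs_smul) (auto simp: supp_def fs_def)

lemma supp_sum: "finite A \<Longrightarrow> supp (\<Sum>i\<in>A. F i) \<subseteq> (\<Union>i\<in>A. supp (F i))"
  by (induct A rule: finite_induct) (auto simp: supp_def)

lemma supp_lin: assumes "fs f" shows "supp (lin G f) \<subseteq> (\<Union>m\<in>supp f. supp (G m))"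
proof -
  have "supp (lin G f) \<subseteq> (\<Union>m\<in>supp f. supp (smul (f m) (G m)))"
    unfolding lin_def using assms by (intro supp_sum[of "supp f", unfolded supp_def[of "lin _ _"]] order_trans[OF supp_sum]) (auto simp: fs_def supp_def)
  also have "\<dots> \<subseteq> (\<Union>m\<in>supp f. supp (G m))" by (auto simp: supp_def smul_apply)
  finally show ?thesis .
qed

definition islin :: "((mon \<Rightarrow> 'a::comm_ring_1) \<Rightarrow> (mon \<Rightarrow> 'a)) \<Rightarrow> bool" where
  "islin \<Phi> \<longleftrightarrow> (\<forall>x. fs x \<longrightarrow> fs (\<Phi> x)) \<and> (\<forall>c x y. fs x \<longrightarrow> fs y \<longrightarrow> \<Phi> (smul c x + y) = smul c (\<Phi> x) + \<Phi> y)"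

lemma islin_lin: assumes "\<And>m. fs (G m)" shows "islin (lin G)"
  unfolding islin_def using assms by (auto simp: fs_lin lin_add lin_smul)

lemma islin_fs: "islin \<Phi> \<Longrightarrow> fs x \<Longrightarrow> fs (\<Phi> x)" by (simp add: islin_def)

lemma islin_zero: assumes "islin \<Phi>" shows "\<Phi> 0 = 0"
proof -
  have "\<Phi> (smul (-1) 0 + 0) = smul (-1) (\<Phi> 0) + \<Phi> 0" using assms fs_zero unfolding islin_def by blast
  then have "\<Phi> 0 = - \<Phi> 0 + \<Phi> 0" by (simp add: smul_neg)
  then show ?thesis by simp
qed

lemma islin_add: "islin \<Phi> \<Longrightarrow> fs x \<Longrightarrow> fs y \<Longrightarrow> \<Phi> (x + y) = \<Phi> x + \<Phi> y"
  unfolding islin_def by (metis smul_one)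

lemma islin_smul: assumes "islin \<Phi>" "fs x" shows "\<Phi> (smul c x) = smul c (\<Phi> x)"
  using assms unfolding islin_def by (metis fs_zero add_0_right islin_zero[OF assms(1)])

lemma islin_neg: assumes "islin \<Phi>" "fs x" shows "\<Phi> (- x) = - \<Phi> x"
proof -
  have "- x = smul (-1) x" by (simp add: smul_neg)
  then show ?thesis using islin_smul[OF assms, of "-1"] by (simp add: smul_neg)
qed

lemma islin_diff: assumes "islin \<Phi>" "fs x" "fs y" shows "\<Phi> (x - y) = \<Phi> x - \<Phi> y"
  using islin_add[OF assms(1,2) fs_neg[OF assms(3)]] islin_neg[OF assms(1,3)] by simp

lemma islin_sum: assumes "islin \<Phi>" "\<And>i. i \<in> A \<Longrightarrow> fs (F i)"
  shows "\<Phi> (\<Sum>i\<in>A. F i) = (\<Sum>i\<in>A. \<Phi> (F i))"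
  using assms(2)
proof (induct A rule: infinite_finite_induct)
  case (infinite A)
  then have "sum F A = 0" "(\<Sum>i\<in>A. \<Phi> (F i)) = 0" by auto
  then show ?case using islin_zero[OF assms(1)] by metis
next
  case empty then show ?case using islin_zero[OF assms(1)] by (simp only: sum.empty)
next
  case (insert a A)
  have "\<Phi> (sum F (insert a A)) = \<Phi> (F a + sum F A)" by (simp only: sum.insert[OF insert(1,2)])
  also have "\<dots> = \<Phi> (F a) + \<Phi> (sum F A)" by (rule islin_add[OF assms(1)]) (use insert in \<open>auto intro!: fs_sum\<close>)
  also have "\<Phi> (sum F A) = (\<Sum>i\<in>A. \<Phi> (F i))" using insert by simp
  also have "\<Phi> (F a) + (\<Sum>i\<in>A. \<Phi> (F i)) = (\<Sum>i\<in>insert a A. \<Phi> (F i))" by (simp only: sum.insert[OF insert(1,2)])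
  finally show ?case .
qed

lemma islin_comp: "islin \<Phi> \<Longrightarrow> islin \<Psi> \<Longrightarrow> islin (\<lambda>x. \<Phi> (\<Psi> x))"
  unfolding islin_def by auto

lemma islin_id: "islin (\<lambda>x. x)" by (simp add: islin_def)

lemma fs_expand: assumes "fs f" shows "f = (\<Sum>m\<in>supp f. smul (f m) (basis_vec m))"
proof
  fix m'
  have "(\<Sum>m\<in>supp f. smul (f m) (basis_vec m)) m' = (\<Sum>m\<in>supp f. f m * (if m' = m then 1 else 0))"
    by (simp add: sum_fun_at basis_vec_def smul_apply)
  also have "\<dots> = f m'"
    using assms by (auto simp: fs_def supp_def if_distrib sum.If_cases cong: if_cong)
  finally show "f m' = (\<Sum>m\<in>supp f. smul (f m) (basis_vec m)) m'" by simp
qed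

lemma islin_expand: assumes "islin \<Phi>" "fs f"
  shows "\<Phi> f = (\<Sum>m\<in>supp f. smul (f m) (\<Phi> (basis_vec m)))"
  apply (subst fs_expand[OF assms(2)])
  apply (subst islin_sum[OF assms(1)])
  by (auto intro!: sum.cong simp: islin_smul[OF assms(1)])

lemma islin_eq: assumes "islin \<Phi>" "islin \<Psi>" "fs f" "\<And>m. m \<in> supp f \<Longrightarrow> \<Phi> (basis_vec m) = \<Psi> (basis_vec m)"
  shows "\<Phi> f = \<Psi> f"
  using assms islin_expand[OF assms(1,3)] islin_expand[OF assms(2,3)] by (auto intro!: sum.cong)

lemma islin_span:
  assumes "islin \<Phi>" "\<And>g. g \<in> G \<Longrightarrow> fs g" "\<And>g. g \<in> G \<Longrightarrow> \<Phi> g \<in> module.span smul G'"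
    and "x \<in> module.span smul G"
  shows "fs x \<and> \<Phi> x \<in> module.span smul G'"
proof (rule Modules.module.span_induct_alt[OF module_smul assms(4), of "\<lambda>x. fs x \<and> \<Phi> x \<in> module.span smul G'"])
  show "fs 0 \<and> \<Phi> 0 \<in> module.span smul G'" using islin_zero[OF assms(1)] Modules.module.span_zero[OF module_smul] by simp
next
  fix c x y assume "x \<in> G" "fs y \<and> \<Phi> y \<in> module.span smul G'"
  then show "fs (smul c x + y) \<and> \<Phi> (smul c x + y) \<in> module.span smul G'" using assms
    by (simp add: islin_def Modules.module.span_add[OF module_smul] Modules.module.span_scale[OF module_smul])
qed

lemma span_fs: assumes "\<And>g. g \<in> G \<Longrightarrow> fs g" "x \<in> module.span smul G" shows "fs x"
  using islin_span[OF islin_id, of G G x] assms Modules.module.span_base[OF module_smul] by blast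


definition zup :: "nat \<Rightarrow> nat \<Rightarrow> (nat \<Rightarrow> nat) \<Rightarrow> nat \<Rightarrow> (nat \<Rightarrow> nat)" where
  "zup p j e t = e(t - j := e (t - j) + p ^ j)"

definition sg :: "nat set \<Rightarrow> nat \<Rightarrow> 'a::comm_ring_1" where
  "sg T t = (-1) ^ card {s\<in>T. s < t}"

lemma Qmon_eq: "Qmon p j (e, T) = (\<Sum>t\<in>T. smul (sg T t) (basis_vec (zup p j e t, T - {t})))"
  by (simp add: Qmon_def zup_def sg_def)

lemma fs_Qmon[simp]: "fs (Qmon p j m)"
proof (cases m)
  case (Pair e T)
  show ?thesis
  proof (cases "finite T")
    case True then show ?thesis unfolding Pair Qmon_eq by (intro fs_sum fs_smul fs_basis)
  next
    case False then show ?thesis unfolding Pair Qmon_eq by simp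
  qed
qed

lemma islin_Qop: "islin (Qop p j)"
  unfolding Qop_lin by (rule islin_lin) simp

lemma Qop_basis[simp]: "Qop p j (basis_vec m) = Qmon p j m"
  unfolding Qop_lin by simp

lemma sum_offdiag_swap: "finite T \<Longrightarrow> (\<Sum>t\<in>T. \<Sum>s\<in>T - {t}. F t s) = (\<Sum>s\<in>T. \<Sum>t\<in>T - {s}. F t s)"
proof -
  assume fin: "finite T"
  have "(\<Sum>t\<in>T. \<Sum>s\<in>T-{t}. F t s) = (\<Sum>t\<in>T. \<Sum>s\<in>{s\<in>T. t\<noteq>s}. F t s)" by (intro sum.cong) auto
  also have "\<dots> = (\<Sum>s\<in>T. \<Sum>t | t\<in>T \<and> t\<noteq>s. F t s)" by (rule sum.swap_restrict[OF fin fin])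
  also have "\<dots> = (\<Sum>s\<in>T. \<Sum>t\<in>T-{s}. F t s)" by (intro sum.cong) auto
  finally show ?thesis .
qed

lemma sg_remove_less:
  assumes "finite T" "a < b" "a \<in> T" "b \<in> T"
  shows "sg (T - {b}) a = sg T a" "(sg (T - {a}) b :: 'a::comm_ring_1) = - sg T b"
proof -
  have "{s\<in>T - {b}. s < a} = {s\<in>T. s < a}" using assms by auto
  then show "sg (T - {b}) a = sg T a" by (simp add: sg_def)
  have c: "{s\<in>T. s < b} = insert a {s\<in>T - {a}. s < b}" using assms by auto
  have "card {s\<in>T. s < b} = Suc (card {s\<in>T - {a}. s < b})"
    unfolding c using assms by (subst card_insert_disjoint) auto
  then show "(sg (T - {a}) b :: 'a) = - sg T b" by (simp add: sg_def)
qed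

lemma sg_swap:
  assumes "finite T" "a \<in> T" "b \<in> T" "a \<noteq> b"
  shows "(sg T b * sg (T - {b}) a :: 'a::comm_ring_1) = - (sg T a * sg (T - {a}) b)"
proof (cases "a < b")
  case True
  note h = sg_remove_less[OF assms(1) True assms(2,3)]
  show ?thesis by (simp only: h) (simp add: mult.commute)
next
  case False then have "b < a" using assms by simp
  note h = sg_remove_less[OF assms(1) \<open>b < a\<close> assms(3,2)]
  show ?thesis by (simp only: h) (simp add: mult.commute)
qed

lemma zup_comm: "zup p i (zup p j e t) s = zup p j (zup p i e s) t"
  by (auto simp: zup_def fun_eq_iff)

lemma QQ_mon: "Qop p i (Qmon p j m) = - Qop p j (Qmon p i m)"
proof (cases m)
  case (Pair e T)
  show ?thesis
  proof (cases "finite T")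
    case False
    have z: "Qop p i 0 = 0" "Qop p j 0 = 0" by (rule islin_zero[OF islin_Qop])+
    from False show ?thesis unfolding Pair Qmon_eq by (simp add: z)
  next
    case fin: True
    define F where "F i j t s = (smul (sg T t * sg (T - {t}) s) (basis_vec (zup p i (zup p j e t) s, T - {t} - {s}))
      :: mon \<Rightarrow> 'a)" for i j t s
    have D: "Qop p i (Qmon p j (e, T)) = (\<Sum>t\<in>T. \<Sum>s\<in>T - {t}. F i j t s)" for i j
    proof -
      have "Qop p i (Qmon p j (e, T)) = (\<Sum>t\<in>T. Qop p i (smul (sg T t) (basis_vec (zup p j e t, T - {t}))))"
        unfolding Qmon_eq by (rule islin_sum[OF islin_Qop]) simp
      also have "\<dots> = (\<Sum>t\<in>T. smul (sg T t) (Qmon p i (zup p j e t, T - {t})))"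
        by (simp add: islin_smul[OF islin_Qop])
      also have "\<dots> = (\<Sum>t\<in>T. \<Sum>s\<in>T - {t}. F i j t s)"
        unfolding Qmon_eq F_def by (simp add: smul_sum)
      finally show ?thesis .
    qed
    have "(\<Sum>t\<in>T. \<Sum>s\<in>T - {t}. F j i t s) = (\<Sum>s\<in>T. \<Sum>t\<in>T - {s}. F j i t s)"
      by (rule sum_offdiag_swap[OF fin])
    also have "\<dots> = (\<Sum>s\<in>T. \<Sum>t\<in>T - {s}. - F i j s t)"
    proof (intro sum.cong refl)
      fix s t assume st: "s \<in> T" "t \<in> T - {s}"
      have e: "T - {t} - {s} = T - {s} - {t}" by auto
      have sw: "(sg T t * sg (T - {t}) s :: 'a) = - (sg T s * sg (T - {s}) t)"
        using sg_swap[OF fin, of s t] st by auto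
      show "F j i t s = - F i j s t"
        unfolding F_def sw e zup_comm[of p j i e t s] by (simp only: smul_neg)
    qed
    also have "\<dots> = - (\<Sum>s\<in>T. \<Sum>t\<in>T - {s}. F i j s t)" by (simp add: sum_negf)
    finally show ?thesis unfolding Pair D by simp
  qed
qed

lemma islin_neg_op: "islin \<Phi> \<Longrightarrow> islin (\<lambda>x. - \<Phi> x)"
  unfolding islin_def by (auto simp: smul_neg)

lemma islin_plus_op: "islin \<Phi> \<Longrightarrow> islin \<Psi> \<Longrightarrow> islin (\<lambda>x. \<Phi> x + \<Psi> x)"
  unfolding islin_def by (auto simp: smul_add)

lemma QQ_anti: assumes "fs f" shows "Qop p i (Qop p j f) = - Qop p j (Qop p i f)"
  by (rule islin_eq[OF islin_comp[OF islin_Qop islin_Qop] islin_neg_op[OF islin_comp[OF islin_Qop islin_Qop]] assms])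
     (simp only: Qop_basis QQ_mon[of p i j])

lemma two_cancel: "(x::'a::idom) + x = 0 \<Longrightarrow> (2::'a) \<noteq> 0 \<Longrightarrow> x = 0"
proof -
  assume a: "x + x = 0" "(2::'a) \<noteq> 0"
  have "2 * x = 0" unfolding mult_2 by (rule a(1))
  with a(2) show "x = 0" by simp
qed

lemma QQ_zero: assumes "fs f" "(2::'a::idom) \<noteq> 0" shows "Qop p j (Qop p j (f :: mon \<Rightarrow> 'a)) = 0"
proof
  fix m
  let ?X = "Qop p j (Qop p j f)"
  have h: "?X = - ?X" by (rule QQ_anti[OF assms(1)])
  have "?X + ?X = ?X + - ?X" by (rule arg_cong[where f="\<lambda>y. ?X + y", OF h])
  also have "\<dots> = 0" by (rule right_minus)
  finally have "?X + ?X = 0" .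
  then have "(?X + ?X) m = 0 m" by (rule fun_cong)
  then have "?X m + ?X m = 0" by (simp only: plus_fun_apply zero_fun_apply)
  then have "?X m = 0" by (rule two_cancel[OF _ assms(2)])
  then show "?X m = 0 m" by (simp only: zero_fun_apply)
qed


definition act :: "nat \<Rightarrow> nat \<Rightarrow> (nat \<Rightarrow> nat) \<Rightarrow> nat set \<Rightarrow> nat \<Rightarrow> bool" where
  "act p j e T n \<longleftrightarrow> 3 \<le> n \<and> (n \<in> T \<or> p ^ j \<le> e (n - j))"

definition Hmon :: "nat \<Rightarrow> nat \<Rightarrow> mon \<Rightarrow> (mon \<Rightarrow> 'a::comm_ring_1)" where
  "Hmon p j m = (let e = fst m; T = snd m; n = (LEAST n. act p j e T n) in
     if (\<exists>n. act p j e T n) \<and> n \<notin> T then basis_vec (e(n - j := e (n - j) - p ^ j), insert n T) else 0)"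

definition Hop :: "nat \<Rightarrow> nat \<Rightarrow> (mon \<Rightarrow> 'a::comm_ring_1) \<Rightarrow> (mon \<Rightarrow> 'a)" where
  "Hop p j = lin (Hmon p j)"

lemma fs_Hmon[simp]: "fs (Hmon p j m)"
  unfolding Hmon_def Let_def by simp

lemma islin_Hop: "islin (Hop p j)"
  unfolding Hop_def by (rule islin_lin) simp

lemma Hop_basis[simp]: "Hop p j (basis_vec m) = Hmon p j m"
  unfolding Hop_def by simp

lemma Hmon_eq:
  assumes "act p j e T n" "\<And>k. k < n \<Longrightarrow> \<not> act p j e T k"
  shows "Hmon p j (e, T) = (if n \<in> T then 0 else basis_vec (e(n - j := e (n - j) - p ^ j), insert n T))"
proof -
  have L: "(LEAST n. act p j e T n) = n"
    by (rule Least_equality[of "act p j e T" n, OF assms(1)]) (use assms(2) not_less in blast)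
  show ?thesis unfolding Hmon_def Let_def fst_conv snd_conv L using assms(1) by auto
qed

lemma cancel_aux: "(h::'b::ab_group_add) + (b + - h) = b" by simp

lemma homotopy_mon:
  assumes fin: "finite T" and ne: "T \<noteq> {}" and T3: "\<And>t. t \<in> T \<Longrightarrow> 3 \<le> t" and j2: "j \<le> 2"
  shows "Hop p j (Qmon p j (e, T)) + Qop p j (Hmon p j (e, T)) = (basis_vec (e, T) :: mon \<Rightarrow> 'a::comm_ring_1)"
proof -
  obtain t0 where t0: "t0 \<in> T" using ne by blast
  have ex: "\<exists>n. act p j e T n" using t0 T3 by (auto simp: act_def)
  define n where "n = (LEAST n. act p j e T n)"
  have an: "act p j e T n" unfolding n_def by (rule LeastI_ex[OF ex])
  have mn: "\<not> act p j e T k" if "k < n" for k using not_less_Least[OF that[unfolded n_def]] by simp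
  have n3: "3 \<le> n" using an by (simp add: act_def)
  have nle: "n \<le> t" if "t \<in> T" for t
  proof (rule ccontr)
    assume "\<not> n \<le> t" then have "t < n" by simp
    then show False using mn[of t] that T3[OF that] by (simp add: act_def)
  qed
  have inj: "a = b" if "3 \<le> a" "3 \<le> b" "a - j = b - j" for a b using that j2 by arith
  have kT: "k \<notin> T" "\<not> p ^ j \<le> e (k - j)" if "k < n" "3 \<le> k" for k
    using mn[OF that(1)] that(2) by (auto simp: act_def)
  have mn': "\<not> act p j (zup p j e t) (T - {t}) k" if "k < n" "n \<le> t" for k t
  proof
    assume a: "act p j (zup p j e t) (T - {t}) k"
    then have k3: "3 \<le> k" by (simp add: act_def)
    have "k - j \<noteq> t - j" using inj[of k t] k3 that by auto
    then have "zup p j e t (k - j) = e (k - j)" by (simp add: zup_def)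
    then show False using a kT[OF that(1) k3] by (auto simp: act_def)
  qed
  have HQ: "Hop p j (Qmon p j (e, T)) = (\<Sum>t\<in>T. smul (sg T t) (Hmon p j (zup p j e t, T - {t})) :: mon \<Rightarrow> 'a)"
  proof -
    have "Hop p j (Qmon p j (e, T)) = (\<Sum>t\<in>T. Hop p j (smul (sg T t) (basis_vec (zup p j e t, T - {t}))) :: mon \<Rightarrow> 'a)"
      unfolding Qmon_eq by (rule islin_sum[OF islin_Hop]) simp
    also have "\<dots> = (\<Sum>t\<in>T. smul (sg T t) (Hmon p j (zup p j e t, T - {t})))"
      by (simp add: islin_smul[OF islin_Hop])
    finally show ?thesis .
  qed
  have sgn: "sg T n = 1" if "n \<in> T"
  proof -
    have e: "{s\<in>T. s < n} = {}" using nle by force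
    show ?thesis unfolding sg_def e by simp
  qed
  show ?thesis
  proof (cases "n \<in> T")
    case True
    have H0: "Hmon p j (e, T) = (0 :: mon \<Rightarrow> 'a)" using Hmon_eq[OF an mn] True by simp
    have Hn: "Hmon p j (zup p j e n, T - {n}) = (basis_vec (e, T) :: mon \<Rightarrow> 'a)"
    proof -
      have a: "act p j (zup p j e n) (T - {n}) n" using n3 by (simp add: act_def zup_def)
      have "Hmon p j (zup p j e n, T - {n}) = (basis_vec ((zup p j e n)(n - j := zup p j e n (n - j) - p ^ j), insert n (T - {n})) :: mon \<Rightarrow> 'a)"
        using Hmon_eq[OF a mn'[OF _ order.refl]] by simp
      also have "(zup p j e n)(n - j := zup p j e n (n - j) - p ^ j) = e" by (auto simp: zup_def fun_eq_iff)
      also have "insert n (T - {n}) = T" using True by auto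
      finally show ?thesis .
    qed
    have Ht: "Hmon p j (zup p j e t, T - {t}) = (0 :: mon \<Rightarrow> 'a)" if "t \<in> T - {n}" for t
    proof -
      have "n \<in> T - {t}" using that True by auto
      then have a: "act p j (zup p j e t) (T - {t}) n" using n3 by (simp add: act_def)
      show ?thesis using Hmon_eq[OF a mn'[OF _ nle]] that \<open>n \<in> T - {t}\<close> by simp
    qed
    have "Hop p j (Qmon p j (e, T)) = smul (sg T n) (Hmon p j (zup p j e n, T - {n})) + (\<Sum>t\<in>T - {n}. smul (sg T t) (Hmon p j (zup p j e t, T - {t})) :: mon \<Rightarrow> 'a)"
      unfolding HQ by (rule sum.remove[OF fin True])
    also have "\<dots> = basis_vec (e, T)" using Ht by (simp add: sgn[OF True] Hn)
    finally show ?thesis using H0 islin_zero[OF islin_Qop] by simp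
  next
    case False
    have pe: "p ^ j \<le> e (n - j)" using an False by (simp add: act_def)
    define e0 where "e0 = e(n - j := e (n - j) - p ^ j)"
    have H0: "Hmon p j (e, T) = (basis_vec (e0, insert n T) :: mon \<Rightarrow> 'a)"
      using Hmon_eq[OF an mn] False by (simp add: e0_def)
    have z0: "zup p j e0 n = e" using pe by (auto simp: zup_def e0_def fun_eq_iff)
    have sgi: "(sg (insert n T) t :: 'a) = - sg T t" if "t \<in> T" for t
    proof -
      have nt: "n < t" using nle[OF that] False that by (cases "n = t") auto
      have "{s\<in>insert n T. s < t} = insert n {s\<in>T. s < t}" using nt by auto
      then have "card {s\<in>insert n T. s < t} = Suc (card {s\<in>T. s < t})" using False fin by simp
      then show ?thesis by (simp add: sg_def)
    qed
    have sgn': "(sg (insert n T) n :: 'a) = 1"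
    proof -
      have e: "{s\<in>insert n T. s < n} = {}" using nle by force
      show ?thesis unfolding sg_def e by simp
    qed
    have Ht: "Hmon p j (zup p j e t, T - {t}) = (basis_vec (zup p j e0 t, insert n T - {t}) :: mon \<Rightarrow> 'a)" if "t \<in> T" for t
    proof -
      have nt: "n \<noteq> t" using False that by auto
      have "n - j \<noteq> t - j" using inj[of n t] n3 T3[OF that] nt by auto
      then have zn: "zup p j e t (n - j) = e (n - j)" by (simp add: zup_def)
      have a: "act p j (zup p j e t) (T - {t}) n" using n3 pe zn by (simp add: act_def)
      have "Hmon p j (zup p j e t, T - {t}) = (basis_vec ((zup p j e t)(n - j := zup p j e t (n - j) - p ^ j), insert n (T - {t})) :: mon \<Rightarrow> 'a)"
        using Hmon_eq[OF a mn'[OF _ nle[OF that]]] False by simp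
      also have "(zup p j e t)(n - j := zup p j e t (n - j) - p ^ j) = zup p j e0 t"
        using \<open>n - j \<noteq> t - j\<close> by (auto simp: zup_def e0_def fun_eq_iff)
      also have "insert n (T - {t}) = insert n T - {t}" using nt by auto
      finally show ?thesis .
    qed
    have "Qop p j (Hmon p j (e, T)) = (Qmon p j (e0, insert n T) :: mon \<Rightarrow> 'a)" by (simp add: H0)
    also have "\<dots> = smul (sg (insert n T) n) (basis_vec (zup p j e0 n, insert n T - {n}))
        + (\<Sum>t\<in>T. smul (sg (insert n T) t) (basis_vec (zup p j e0 t, insert n T - {t})))"
      unfolding Qmon_eq by (rule sum.insert[OF fin False])
    also have "\<dots> = basis_vec (e, T) + (\<Sum>t\<in>T. smul (- sg T t) (Hmon p j (zup p j e t, T - {t})))"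
    proof -
      have "insert n T - {n} = T" using False by auto
      moreover have "(\<Sum>t\<in>T. smul (sg (insert n T) t) (basis_vec (zup p j e0 t, insert n T - {t}))) =
          (\<Sum>t\<in>T. smul (- sg T t) (Hmon p j (zup p j e t, T - {t})) :: mon \<Rightarrow> 'a)"
        by (rule sum.cong[OF refl]) (simp add: sgi Ht)
      ultimately show ?thesis by (simp add: sgn' z0)
    qed
    also have "(\<Sum>t\<in>T. smul (- sg T t) (Hmon p j (zup p j e t, T - {t}))) = - Hop p j (Qmon p j (e, T) :: mon \<Rightarrow> 'a)"
      unfolding HQ by (simp add: smul_neg sum_negf)
    finally have X: "Qop p j (Hmon p j (e, T)) = basis_vec (e, T) + - Hop p j (Qmon p j (e, T) :: mon \<Rightarrow> 'a)" .
    show ?thesis unfolding X by (rule cancel_aux)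
  qed
qed


definition MM :: "nat \<Rightarrow> mon set" where "MM k = {m. valid_mon m \<and> mlen m = k}"

definition LL :: "nat \<Rightarrow> (mon \<Rightarrow> 'a::comm_ring_1) set" where
  "LL k = {f. fs f \<and> supp f \<subseteq> MM k}"

lemma LL_fs: "f \<in> LL k \<Longrightarrow> fs f" by (simp add: LL_def)
lemma LL_D: "f \<in> LL k \<Longrightarrow> f m \<noteq> 0 \<Longrightarrow> valid_mon m \<and> mlen m = k"
  unfolding LL_def MM_def supp_def by blast
lemma LL_I: "fs f \<Longrightarrow> (\<And>m. f m \<noteq> 0 \<Longrightarrow> valid_mon m \<and> mlen m = k) \<Longrightarrow> f \<in> LL k"
  unfolding LL_def MM_def supp_def by blast

lemma LL_supp: "fs h \<Longrightarrow> f \<in> LL k \<Longrightarrow> g \<in> LL k \<Longrightarrow> (\<And>m. h m \<noteq> 0 \<Longrightarrow> f m \<noteq> 0 \<or> g m \<noteq> 0) \<Longrightarrow> h \<in> LL k"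
  by (rule LL_I) (auto dest: LL_D)

lemma LL_zero[simp]: "0 \<in> LL k" by (rule LL_I) auto
lemma LL_add: "f \<in> LL k \<Longrightarrow> g \<in> LL k \<Longrightarrow> f + g \<in> LL k"
  by (rule LL_supp[of _ f k g]) (auto simp: LL_fs)
lemma LL_neg: "f \<in> LL k \<Longrightarrow> - f \<in> LL k"
  by (rule LL_supp[of _ f k f]) (auto simp: LL_fs)
lemma LL_diff: "f \<in> LL k \<Longrightarrow> g \<in> LL k \<Longrightarrow> f - g \<in> LL k"
  by (rule LL_supp[of _ f k g]) (auto simp: LL_fs)
lemma LL_smul: "f \<in> LL k \<Longrightarrow> smul c f \<in> LL k"
  by (rule LL_supp[of _ f k f]) (auto simp: LL_fs smul_apply)
lemma LL_basis: assumes "valid_mon m" "mlen m = k" shows "basis_vec m \<in> LL k"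
proof (rule LL_I[OF fs_basis])
  fix m' assume "basis_vec m m' \<noteq> 0"
  then have "m' = m" by (simp add: basis_vec_def split: if_splits)
  then show "valid_mon m' \<and> mlen m' = k" using assms by simp
qed
lemma LL_sum: "(\<And>i. i \<in> A \<Longrightarrow> F i \<in> LL k) \<Longrightarrow> (\<Sum>i\<in>A. F i) \<in> LL k"
  by (induct A rule: infinite_finite_induct) (auto intro: LL_add)

lemma supp_basis: "supp (basis_vec m :: mon \<Rightarrow> 'a::comm_ring_1) = {m}"
  by (simp add: supp_def basis_vec_def)

lemma supp_smul: "supp (smul c f) \<subseteq> supp f" by (auto simp: supp_def smul_apply)

lemma supp_Qmon: "supp (Qmon p j (e, T) :: mon \<Rightarrow> 'a::comm_ring_1) \<subseteq> (\<lambda>t. (zup p j e t, T - {t})) ` T"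
proof (cases "finite T")
  case True
  have "supp (Qmon p j (e, T) :: mon \<Rightarrow> 'a) \<subseteq> (\<Union>t\<in>T. supp (smul (sg T t) (basis_vec (zup p j e t, T - {t})) :: mon \<Rightarrow> 'a))"
    unfolding Qmon_eq by (rule supp_sum[OF True])
  also have "\<dots> \<subseteq> (\<Union>t\<in>T. supp (basis_vec (zup p j e t, T - {t}) :: mon \<Rightarrow> 'a))"
    using supp_smul by blast
  finally show ?thesis by (auto simp: supp_basis)
next
  case False then show ?thesis unfolding Qmon_eq by (simp add: supp_def)
qed

lemma valid_zup:
  assumes "valid_mon (e, T)" "t \<in> T" "j \<le> 2"
  shows "valid_mon (zup p j e t, T - {t}) \<and> mlen (zup p j e t, T - {t}) = mlen (e, T) - 1"
proof -
  have t3: "3 \<le> t" using assms by (auto simp: valid_mon_def)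
  have fe: "finite {n. e n \<noteq> 0}" and e0: "e 0 = 0" and fT: "finite T" and T3: "T \<subseteq> {3..}"
    using assms by (auto simp: valid_mon_def)
  have "{n. zup p j e t n \<noteq> 0} \<subseteq> insert (t - j) {n. e n \<noteq> 0}" by (auto simp: zup_def)
  then have "finite {n. zup p j e t n \<noteq> 0}" using fe finite_subset by blast
  moreover have "zup p j e t 0 = 0" using t3 assms(3) e0 by (simp add: zup_def)
  ultimately show ?thesis using fT T3 assms(2) by (auto simp: valid_mon_def mlen_def)
qed

lemma LL_Qop: assumes "f \<in> LL k" "j \<le> 2" shows "Qop p j f \<in> LL (k - 1)"
proof (rule LL_I)
  show "fs (Qop p j f)" using islin_fs[OF islin_Qop LL_fs[OF assms(1)]] .
  fix m' assume "Qop p j f m' \<noteq> 0"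
  then have "m' \<in> supp (lin (Qmon p j) f)" by (simp add: supp_def Qop_lin)
  then obtain m where m: "m \<in> supp f" "m' \<in> supp (Qmon p j m :: mon \<Rightarrow> 'a)"
    using supp_lin[OF LL_fs[OF assms(1)]] by blast
  obtain e T where eT: "m = (e, T)" by (cases m)
  have v: "valid_mon (e, T)" "mlen (e, T) = k" using LL_D[OF assms(1)] m(1) eT by (auto simp: supp_def)
  from m(2) eT supp_Qmon obtain t where "t \<in> T" "m' = (zup p j e t, T - {t})" by blast
  then show "valid_mon m' \<and> mlen m' = k - 1" using valid_zup[OF v(1) _ assms(2)] v(2) by auto
qed

lemma Hmon_cases: "Hmon p j (e, T) = 0 \<or> (\<exists>n. act p j e T n \<and> n \<notin> T \<and> Hmon p j (e, T) = basis_vec (e(n - j := e (n - j) - p ^ j), insert n T))"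
  unfolding Hmon_def Let_def fst_conv snd_conv by (metis LeastI_ex)

lemma LL_Hop: assumes "f \<in> LL k" "j \<le> 2" shows "Hop p j f \<in> LL (k + 1)"
proof (rule LL_I)
  show "fs (Hop p j f)" using islin_fs[OF islin_Hop LL_fs[OF assms(1)]] .
  fix m' assume "Hop p j f m' \<noteq> 0"
  then have "m' \<in> supp (lin (Hmon p j) f)" by (simp add: supp_def Hop_def)
  then obtain m where m: "m \<in> supp f" "m' \<in> supp (Hmon p j m :: mon \<Rightarrow> 'a)"
    using supp_lin[OF LL_fs[OF assms(1)]] by blast
  obtain e T where eT: "m = (e, T)" by (cases m)
  have v: "valid_mon (e, T)" "mlen (e, T) = k" using LL_D[OF assms(1)] m(1) eT by (auto simp: supp_def)
  have "Hmon p j (e, T) \<noteq> (0 :: mon \<Rightarrow> 'a)" using m(2) eT by (auto simp: supp_def)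
  with Hmon_cases[of p j e T] obtain n where n: "act p j e T n" "n \<notin> T"
      "Hmon p j (e, T) = (basis_vec (e(n - j := e (n - j) - p ^ j), insert n T) :: mon \<Rightarrow> 'a)"
    by blast
  have m'eq: "m' = (e(n - j := e (n - j) - p ^ j), insert n T)" using m(2) eT n(3) by (simp add: supp_basis)
  have n3: "3 \<le> n" using n(1) by (simp add: act_def)
  have fe: "finite {n. e n \<noteq> 0}" and e0: "e 0 = 0" and fT: "finite T" and T3: "T \<subseteq> {3..}"
    using v by (auto simp: valid_mon_def)
  have "{x. (e(n - j := e (n - j) - p ^ j)) x \<noteq> 0} \<subseteq> insert (n - j) {n. e n \<noteq> 0}" by auto
  then have "finite {x. (e(n - j := e (n - j) - p ^ j)) x \<noteq> 0}" using fe finite_subset by blast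
  moreover have "(e(n - j := e (n - j) - p ^ j)) 0 = 0" using n3 assms(2) e0 by simp
  moreover have "finite (insert n T)" "insert n T \<subseteq> {3..}" "card (insert n T) = k + 1"
    using fT T3 n3 n(2) v(2) by (auto simp: mlen_def)
  ultimately show "valid_mon m' \<and> mlen m' = k + 1"
    unfolding m'eq valid_mon_def mlen_def fst_conv snd_conv by blast
qed

lemma homotopy:
  assumes "f \<in> LL k" "1 \<le> k" "j \<le> 2"
  shows "Hop p j (Qop p j f) + Qop p j (Hop p j f) = f"
proof -
  have "(\<lambda>x. Hop p j (Qop p j x) + Qop p j (Hop p j x)) f = (\<lambda>x. x) f"
  proof (rule islin_eq[OF islin_plus_op[OF islin_comp[OF islin_Hop islin_Qop] islin_comp[OF islin_Qop islin_Hop]] islin_id LL_fs[OF assms(1)]])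
    fix m assume "m \<in> supp f"
    then have v: "valid_mon m" "mlen m = k" using LL_D[OF assms(1)] by (auto simp: supp_def)
    obtain e T where eT: "m = (e, T)" by (cases m)
    have fT: "finite T" and neT: "T \<noteq> {}" and T3: "\<And>t. t \<in> T \<Longrightarrow> 3 \<le> t"
      using v assms(2) eT by (auto simp: valid_mon_def mlen_def)
    show "Hop p j (Qop p j (basis_vec m)) + Qop p j (Hop p j (basis_vec m)) = basis_vec m"
      unfolding eT Qop_basis Hop_basis by (rule homotopy_mon[OF fT neT T3 assms(3)])
  qed
  then show ?thesis by simp
qed

lemma exact:
  assumes "f \<in> LL k" "1 \<le> k" "j \<le> 2" "Qop p j f = 0"
  shows "f = Qop p j (Hop p j f)"
proof -
  have z: "Hop p j (0::mon \<Rightarrow> 'a) = 0" by (rule islin_zero[OF islin_Hop])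
  show ?thesis using homotopy[OF assms(1-3), of p] unfolding assms(4) z by simp
qed


definition zdeg :: "nat \<Rightarrow> (nat \<Rightarrow> nat) \<Rightarrow> nat" where
  "zdeg p e = (\<Sum>n\<in>{n. e n \<noteq> 0}. e n * (2 * (p ^ n - 1)))"

lemma mdeg_split: "mdeg p (e, T) = zdeg p e + (\<Sum>n\<in>T. 2 * p ^ n - 1)"
  by (simp add: mdeg_def zdeg_def)

lemma zdeg_upd:
  assumes fe: "finite {n. e n \<noteq> 0}"
  shows "zdeg p (e(k := e k + c)) = zdeg p e + c * (2 * (p ^ k - 1))"
proof -
  define w where "w n = 2 * (p ^ n - 1)" for n
  define A where "A = insert k {n. e n \<noteq> 0}"
  have fA: "finite A" using fe by (simp add: A_def)
  have z1: "zdeg p (e(k := e k + c)) = (\<Sum>n\<in>A. (e(k := e k + c)) n * w n)"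
    unfolding zdeg_def w_def by (rule sum.mono_neutral_left[OF fA]) (auto simp: A_def)
  have z2: "zdeg p e = (\<Sum>n\<in>A. e n * w n)"
    unfolding zdeg_def w_def by (rule sum.mono_neutral_left[OF fA]) (auto simp: A_def)
  have "(\<Sum>n\<in>A. (e(k := e k + c)) n * w n) = (\<Sum>n\<in>A. e n * w n + (if n = k then c * w k else 0))"
    by (rule sum.cong) (auto simp: algebra_simps)
  also have "\<dots> = (\<Sum>n\<in>A. e n * w n) + (\<Sum>n\<in>A. (if n = k then c * w k else 0))"
    by (rule sum.distrib)
  also have "(\<Sum>n\<in>A. (if n = k then c * w k else 0)) = c * w k"
    by (subst sum.delta[OF fA]) (simp add: A_def)
  finally show ?thesis using z1 z2 by (simp add: w_def)
qed

lemma arith1: assumes "1 \<le> (p::nat)" "1 \<le> (t::nat)" shows "p * (2 * (p ^ (t - 1) - 1)) + (2 * p - 1) = 2 * p ^ t - 1"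
proof -
  obtain p' where p: "p = Suc p'" using assms(1) by (cases p) auto
  obtain t' where t: "t = Suc t'" using assms(2) by (cases t) auto
  have "1 \<le> p ^ t'" using assms(1) by simp
  then obtain r where r: "p ^ t' = Suc r" by (cases "p ^ t'") auto
  have "p ^ t = p * Suc r" using r t by simp
  then show ?thesis using r t p by (simp add: algebra_simps)
qed

lemma mdeg_Q1:
  assumes v: "valid_mon (e, T)" and t: "t \<in> T" and p1: "1 \<le> p"
  shows "mdeg p (zup p 1 e t, T - {t}) + (2 * p - 1) = mdeg p (e, T)"
proof -
  have fe: "finite {n. e n \<noteq> 0}" and fT: "finite T" and t3: "3 \<le> t" using v t by (auto simp: valid_mon_def)
  have "zdeg p (zup p 1 e t) = zdeg p e + p * (2 * (p ^ (t - 1) - 1))"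
    unfolding zup_def using zdeg_upd[OF fe, of p "t - 1" "p ^ 1"] by simp
  moreover have "(\<Sum>n\<in>T. 2 * p ^ n - 1) = (2 * p ^ t - 1) + (\<Sum>n\<in>T - {t}. 2 * p ^ n - 1)"
    by (rule sum.remove[OF fT t])
  ultimately show ?thesis unfolding mdeg_split using arith1[OF p1, of t] t3 by simp
qed

lemma mdeg_H0:
  assumes v: "valid_mon (e, T)" and p1: "1 \<le> p" and nz: "(Hmon p 0 (e, T) :: mon \<Rightarrow> 'a::comm_ring_1) m' \<noteq> 0"
  shows "mdeg p m' = mdeg p (e, T) + 1"
proof -
  have fe: "finite {n. e n \<noteq> 0}" and fT: "finite T" using v by (auto simp: valid_mon_def)
  have "Hmon p 0 (e, T) \<noteq> (0 :: mon \<Rightarrow> 'a)" using nz by auto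
  with Hmon_cases[of p 0 e T] obtain n where n: "act p 0 e T n" "n \<notin> T"
      "Hmon p 0 (e, T) = (basis_vec (e(n - 0 := e (n - 0) - p ^ 0), insert n T) :: mon \<Rightarrow> 'a)"
    by blast
  have m': "m' = (e(n := e n - 1), insert n T)" using nz n(3) by (simp add: basis_vec_def split: if_splits)
  have en: "1 \<le> e n" using n(1,2) by (simp add: act_def)
  define e' where "e' = e(n := e n - 1)"
  have fe': "finite {x. e' x \<noteq> 0}"
    by (rule finite_subset[OF _ fe]) (auto simp: e'_def)
  have ee: "e = e'(n := e' n + 1)" using en by (auto simp: e'_def fun_eq_iff)
  have zd: "zdeg p e = zdeg p e' + 2 * (p ^ n - 1)"
    using zdeg_upd[OF fe', of p n 1] ee by simp
  have td: "(\<Sum>x\<in>insert n T. 2 * p ^ x - 1) = (2 * p ^ n - 1) + (\<Sum>x\<in>T. 2 * p ^ x - 1)"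
    using fT n(2) by simp
  have pn: "1 \<le> p ^ n" using p1 by simp
  show ?thesis unfolding m' mdeg_split e'_def[symmetric] zd td using pn by simp
qed

definition dB :: "nat \<Rightarrow> nat \<Rightarrow> (mon \<Rightarrow> 'a::comm_ring_1) \<Rightarrow> bool" where
  "dB p N f \<longleftrightarrow> (\<forall>m. f m \<noteq> 0 \<longrightarrow> mdeg p m < N)"

lemma dB_step:
  assumes p2: "2 \<le> p" and x: "x \<in> LL 2" and d: "dB p (Suc N) x"
  shows "dB p N (Hop p 0 (Qop p 1 x))"
  unfolding dB_def
proof (intro allI impI)
  fix m'' assume "Hop p 0 (Qop p 1 x) m'' \<noteq> 0"
  then have "m'' \<in> supp (lin (Hmon p 0) (Qop p 1 x))" by (simp add: supp_def Hop_def)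
  then obtain m' where m': "m' \<in> supp (Qop p 1 x)" "m'' \<in> supp (Hmon p 0 m' :: mon \<Rightarrow> 'a)"
    using supp_lin[OF islin_fs[OF islin_Qop LL_fs[OF x]]] by blast
  from m'(1) have "m' \<in> supp (lin (Qmon p 1) x)" by (simp add: Qop_lin)
  then obtain m where m: "m \<in> supp x" "m' \<in> supp (Qmon p 1 m :: mon \<Rightarrow> 'a)"
    using supp_lin[OF LL_fs[OF x]] by blast
  obtain e T where eT: "m = (e, T)" by (cases m)
  have v: "valid_mon (e, T)" "mdeg p (e, T) < Suc N"
    using LL_D[OF x] d m(1) eT by (auto simp: supp_def dB_def)
  from m(2) eT supp_Qmon obtain t where t: "t \<in> T" "m' = (zup p 1 e t, T - {t})" by blast
  have v': "valid_mon (zup p 1 e t, T - {t})" using valid_zup[OF v(1) t(1)] by simp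
  have d1: "mdeg p m' + (2 * p - 1) = mdeg p (e, T)" using mdeg_Q1[OF v(1) t(1)] p2 t(2) by simp
  have p1: "1 \<le> p" using p2 by simp
  have nz: "(Hmon p 0 (zup p 1 e t, T - {t}) :: mon \<Rightarrow> 'a) m'' \<noteq> 0" using m'(2) t(2) by (simp add: supp_def)
  have d2: "mdeg p m'' = mdeg p m' + 1"
    using mdeg_H0[OF v' p1 nz] t(2) by simp
  show "mdeg p m'' < N" using d1 d2 v(2) p2 by simp
qed

lemma cancel2: "(0 + h) + - h = (0::'b::group_add)" by simp

lemma K1':
  assumes p2: "2 \<le> p" and two: "(2::'a::idom) \<noteq> 0"
  shows "x \<in> LL 2 \<Longrightarrow> dB p N x \<Longrightarrow> Qop p 0 (Qop p 1 x) = 0 \<Longrightarrow>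
    \<exists>a\<in>LL 3. \<exists>b\<in>LL 3. x = Qop p 0 a + Qop p 1 (b :: mon \<Rightarrow> 'a)"
proof (induct N arbitrary: x)
  case 0
  have "x = 0" using "0.prems"(2) by (auto simp: dB_def fun_eq_iff)
  moreover have "Qop p 0 (0::mon \<Rightarrow> 'a) + Qop p 1 0 = 0" by (simp add: islin_zero[OF islin_Qop])
  ultimately show ?case by (metis LL_zero)
next
  case (Suc N)
  have xL: "x \<in> LL 2" and fx: "fs x" using Suc.prems(1) LL_fs by auto
  define z where "z = Qop p 1 x"
  have zL: "z \<in> LL 1" unfolding z_def using LL_Qop[OF xL, of 1 p] by simp
  define y where "y = Hop p 0 z"
  have zy: "z = Qop p 0 y" unfolding y_def
    by (rule exact[OF zL _ _ Suc.prems(3)[folded z_def]]) auto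
  have yL: "y \<in> LL 2" unfolding y_def using LL_Hop[OF zL, of 0 p] by (simp add: numeral_2_eq_2)
  have fy: "fs y" using LL_fs[OF yL] .
  have dy: "dB p N y" unfolding y_def z_def by (rule dB_step[OF p2 xL Suc.prems(2)])
  have "Qop p 0 (Qop p 1 y) = - Qop p 1 (Qop p 0 y)" by (rule QQ_anti[OF fy])
  also have "Qop p 1 (Qop p 0 y) = 0" unfolding zy[symmetric] z_def by (rule QQ_zero[OF fx two])
  finally have "Qop p 0 (Qop p 1 y) = - 0" .
  then have "Qop p 0 (Qop p 1 y) = 0" by (simp only: minus_zero)
  from Suc.hyps[OF yL dy this] obtain a b where ab: "a \<in> LL 3" "b \<in> LL 3" "y = Qop p 0 a + Qop p 1 b" by blast
  have fa: "fs a" and fb: "fs b" using ab LL_fs by auto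
  have Q0bL: "Qop p 0 b \<in> LL 2" using LL_Qop[OF ab(2), of 0 p] by simp
  define x' where "x' = x + Qop p 0 b"
  have x'L: "x' \<in> LL 2" unfolding x'_def by (rule LL_add[OF xL Q0bL])
  have "Qop p 1 x' = Qop p 1 x + Qop p 1 (Qop p 0 b)"
    unfolding x'_def by (rule islin_add[OF islin_Qop fx islin_fs[OF islin_Qop fb]])
  also have "Qop p 1 (Qop p 0 b) = - Qop p 0 (Qop p 1 b)" by (rule QQ_anti[OF fb])
  also have "Qop p 1 x = Qop p 0 (Qop p 0 a) + Qop p 0 (Qop p 1 b)"
    using zy ab(3) islin_add[OF islin_Qop islin_fs[OF islin_Qop fa] islin_fs[OF islin_Qop fb]] z_def by simp
  also have "Qop p 0 (Qop p 0 a) = 0" by (rule QQ_zero[OF fa two])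
  finally have "Qop p 1 x' = (0 + Qop p 0 (Qop p 1 b)) + - Qop p 0 (Qop p 1 b)" .
  then have "Qop p 1 x' = 0" by (simp only: cancel2)
  have x'e: "x' = Qop p 1 (Hop p 1 x')" by (rule exact[OF x'L _ _ \<open>Qop p 1 x' = 0\<close>]) auto
  have cL: "Hop p 1 x' \<in> LL 3" using LL_Hop[OF x'L, of 1 p] by simp
  have "x = x' - Qop p 0 b" unfolding x'_def by simp
  also have "\<dots> = Qop p 0 (- b) + Qop p 1 (Hop p 1 x')"
    using x'e islin_neg[OF islin_Qop fb] by simp
  finally show ?case using LL_neg[OF ab(2)] cL by blast
qed


lemma subsets012: "I \<subseteq> {0,1,2::nat} \<Longrightarrow> I = {} \<or> I = {0} \<or> I = {1} \<or> I = {2} \<or> I = {0,1} \<or> I = {0,2} \<or> I = {1,2} \<or> I = {0,1,2}"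
proof -
  assume "I \<subseteq> {0,1,2}"
  then have "I \<in> Pow {0,1,2}" by simp
  then show ?thesis by (simp add: Pow_insert insert_commute)
qed

lemma Qseq_vals:
 "Qseq p {} f = f"
 "Qseq p {0} f = Qop p 0 f"
 "Qseq p {1} f = Qop p 1 f"
 "Qseq p {2} f = Qop p 2 f"
 "Qseq p {0,1} f = Qop p 0 (Qop p 1 f)"
 "Qseq p {0,2} f = Qop p 0 (Qop p 2 f)"
 "Qseq p {1,2} f = Qop p 1 (Qop p 2 f)"
 "Qseq p {0,1,2} f = Qop p 0 (Qop p 1 (Qop p 2 f))"
 by (simp_all add: Qseq_def)

lemma Qseq_vals':
 "Qseq p {Suc 0} f = Qop p (Suc 0) f"
 "Qseq p {0,Suc 0} f = Qop p 0 (Qop p (Suc 0) f)"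
 "Qseq p {Suc 0,2} f = Qop p (Suc 0) (Qop p 2 f)"
 "Qseq p {0,Suc 0,2} f = Qop p 0 (Qop p (Suc 0) (Qop p 2 f))"
 by (simp_all add: Qseq_def)

lemma islin_foldr: "islin (\<lambda>f. foldr (Qop p) xs f)"
proof (induct xs)
  case Nil then show ?case by (simp add: islin_id)
next
  case (Cons x xs) then show ?case using islin_comp[OF islin_Qop Cons] by simp
qed

lemma islin_Qseq: "islin (Qseq p I)"
proof -
  have "Qseq p I = (\<lambda>f. foldr (Qop p) (sorted_list_of_set I) f)" by (rule ext) (simp add: Qseq_def)
  then show ?thesis using islin_foldr[of p "sorted_list_of_set I"] by metis
qed

lemma LL_foldr: "f \<in> LL k \<Longrightarrow> (\<forall>j\<in>set xs. j \<le> 2) \<Longrightarrow> foldr (Qop p) xs f \<in> LL (k - length xs)"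
proof (induct xs)
  case Nil then show ?case by simp
next
  case (Cons x xs)
  then have "foldr (Qop p) xs f \<in> LL (k - length xs)" by simp
  moreover have "x \<le> 2" using Cons.prems(2) by simp
  ultimately have "Qop p x (foldr (Qop p) xs f) \<in> LL (k - length xs - 1)" by (rule LL_Qop)
  then show ?case by simp
qed

lemma LL_Qseq: assumes "f \<in> LL k" "I \<subseteq> {0,1,2}" shows "Qseq p I f \<in> LL (k - card I)"
proof -
  have fI: "finite I" using assms(2) finite_subset by blast
  have "\<forall>j\<in>set (sorted_list_of_set I). j \<le> 2" using assms(2) fI by auto
  from LL_foldr[OF assms(1) this, of p] show ?thesis using fI by (simp add: Qseq_def)
qed

definition PP :: "nat \<Rightarrow> (mon \<Rightarrow> 'a::comm_ring_1) \<Rightarrow> (mon \<Rightarrow> 'a)" where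
  "PP k f = (\<lambda>m. if mlen m = k then f m else 0)"

lemma islin_PP: "islin (PP k)"
  unfolding islin_def
proof (intro conjI allI impI)
  fix x :: "mon \<Rightarrow> 'a" assume "fs x"
  then show "fs (PP k x)" unfolding fs_def supp_def PP_def
    by (rule finite_subset[rotated]) auto
next
  fix c and x y :: "mon \<Rightarrow> 'a"
  show "PP k (smul c x + y) = smul c (PP k x) + PP k y"
    by (rule ext) (simp add: PP_def smul_apply)
qed

lemma PP_LL: assumes "g \<in> LL L" shows "PP k g = (if k = L then g else 0)"
proof (rule ext)
  fix m show "PP k g m = (if k = L then g else 0) m"
    using LL_D[OF assms, of m] by (cases "g m = 0") (auto simp: PP_def)
qed

definition GS :: "nat \<Rightarrow> (mon \<Rightarrow> 'a::comm_ring_1) set" where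
  "GS p = {Qseq p I (basis_vec m) | I m. I \<subseteq> {0,1,2} \<and> valid_mon m \<and> 3 \<le> mlen m}"

lemma Ssub_GS: "Ssub p = module.span smul (GS p)" by (simp add: Ssub_def GS_def)

lemma GS_LL: "g \<in> GS p \<Longrightarrow> \<exists>I m. I \<subseteq> {0,1,2} \<and> valid_mon m \<and> 3 \<le> mlen m \<and> g = Qseq p I (basis_vec m) \<and> g \<in> LL (mlen m - card I)"
proof -
  assume "g \<in> GS p"
  then obtain I m where Im: "I \<subseteq> {0,1,2}" "valid_mon m" "3 \<le> mlen m" "g = Qseq p I (basis_vec m)"
    unfolding GS_def by blast
  have "g \<in> LL (mlen m - card I)" unfolding Im(4) by (rule LL_Qseq[OF LL_basis[OF Im(2) refl] Im(1)])
  then show ?thesis using Im by blast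
qed

lemma fs_GS: "g \<in> GS p \<Longrightarrow> fs g" using GS_LL LL_fs by blast

lemma fs_Ssub: "s \<in> Ssub p \<Longrightarrow> fs s" unfolding Ssub_GS by (rule span_fs[OF fs_GS])

lemmas span_zero' = Modules.module.span_zero[OF module_smul]
lemmas span_add' = Modules.module.span_add[OF module_smul]
lemmas span_scale' = Modules.module.span_scale[OF module_smul]
lemmas span_neg' = Modules.module.span_neg[OF module_smul]
lemmas span_diff' = Modules.module.span_diff[OF module_smul]
lemmas span_base' = Modules.module.span_base[OF module_smul]
lemmas span_sum' = Modules.module.span_sum[OF module_smul]
lemmas span_mono' = Modules.module.span_mono[OF module_smul]

lemma S_PP: assumes "s \<in> Ssub p" shows "PP k s \<in> Ssub p"
proof -
  have "fs s \<and> PP k s \<in> module.span smul (GS p)"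
  proof (rule islin_span[OF islin_PP fs_GS])
    fix g :: "mon \<Rightarrow> 'a" assume g: "g \<in> GS p"
    then obtain I m where "g \<in> LL (mlen m - card (I::nat set))" using GS_LL[OF g] by blast
    then show "PP k g \<in> module.span smul (GS p)"
      using PP_LL[of g _ k] span_base'[OF g] span_zero' by (cases "k = mlen m - card I") auto
  qed (use assms(1) in \<open>unfold Ssub_GS\<close>)
  then show ?thesis by (simp add: Ssub_GS)
qed

lemma Q_Qseq:
  assumes I: "I \<subseteq> {0,1,2}" and j: "j \<le> 1" and f: "fs f" and two: "(2::'a::idom) \<noteq> 0"
  shows "Qop p j (Qseq p I f) = (0 :: mon \<Rightarrow> 'a) \<or> (\<exists>I'\<subseteq>{0,1,2}. Qop p j (Qseq p I f) = Qseq p I' f \<or> Qop p j (Qseq p I f) = - Qseq p I' f)"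
proof -
  have fQ: "fs (Qop p i g)" if "fs g" for i and g :: "mon \<Rightarrow> 'a" using islin_fs[OF islin_Qop that] .
  have z: "Qop p i (0::mon \<Rightarrow> 'a) = 0" for i by (rule islin_zero[OF islin_Qop])
  have n: "Qop p i (- g) = - Qop p i g" if "fs g" for i and g :: "mon \<Rightarrow> 'a" by (rule islin_neg[OF islin_Qop that])
  have jj: "j = 0 \<or> j = 1" using j by auto
  have a01: "Qop p 1 (Qop p 0 g) = - Qop p 0 (Qop p 1 g)" if "fs g" for g :: "mon \<Rightarrow> 'a" by (rule QQ_anti[OF that])
  have zz: "Qop p i (Qop p i g) = 0" if "fs g" for i and g :: "mon \<Rightarrow> 'a" by (rule QQ_zero[OF that two])
  from subsets012[OF I] jj show ?thesis
  proof (elim disjE)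
    assume "I = {}" "j = 0" then show ?thesis by (intro disjI2 exI[of _ "{0}"]) (simp add: Qseq_vals Qseq_vals')
  next
    assume "I = {}" "j = 1" then show ?thesis by (intro disjI2 exI[of _ "{1}"]) (simp add: Qseq_vals Qseq_vals')
  next
    assume "I = {0}" "j = 0" then show ?thesis using zz[OF f, of 0] by (simp add: Qseq_vals Qseq_vals')
  next
    assume "I = {0}" "j = 1" then show ?thesis using a01[OF f] by (intro disjI2 exI[of _ "{0,1}"]) (simp add: Qseq_vals Qseq_vals')
  next
    assume "I = {1}" "j = 0" then show ?thesis by (intro disjI2 exI[of _ "{0,1}"]) (simp add: Qseq_vals Qseq_vals')
  next
    assume "I = {1}" "j = 1" then show ?thesis using zz[OF f, of 1] by (simp add: Qseq_vals Qseq_vals')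
  next
    assume "I = {2}" "j = 0" then show ?thesis by (intro disjI2 exI[of _ "{0,2}"]) (simp add: Qseq_vals Qseq_vals')
  next
    assume "I = {2}" "j = 1" then show ?thesis by (intro disjI2 exI[of _ "{1,2}"]) (simp add: Qseq_vals Qseq_vals')
  next
    assume "I = {0,1}" "j = 0" then show ?thesis using zz[OF fQ[OF f], of 0 1] by (simp add: Qseq_vals Qseq_vals')
  next
    assume "I = {0,1}" "j = 1"
    have "Qop p 1 (Qop p 0 (Qop p 1 f)) = - Qop p 0 (Qop p 1 (Qop p 1 f))" by (rule a01[OF fQ[OF f]])
    also have "Qop p 1 (Qop p 1 f) = 0" by (rule zz[OF f])
    also have "Qop p 0 (0::mon \<Rightarrow> 'a) = 0" by (rule z)
    also have "- (0::mon \<Rightarrow> 'a) = 0" by (rule minus_zero)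
    finally show ?thesis using \<open>I = {0,1}\<close> \<open>j = 1\<close> by (simp add: Qseq_vals Qseq_vals' z)
  next
    assume "I = {0,2}" "j = 0" then show ?thesis using zz[OF fQ[OF f], of 0 2] by (simp add: Qseq_vals Qseq_vals')
  next
    assume "I = {0,2}" "j = 1" then show ?thesis using a01[OF fQ[OF f], of 2] by (intro disjI2 exI[of _ "{0,1,2}"]) (simp add: Qseq_vals Qseq_vals')
  next
    assume "I = {1,2}" "j = 0" then show ?thesis by (intro disjI2 exI[of _ "{0,1,2}"]) (simp add: Qseq_vals Qseq_vals')
  next
    assume "I = {1,2}" "j = 1" then show ?thesis using zz[OF fQ[OF f], of 1 2] by (simp add: Qseq_vals Qseq_vals')
  next
    assume "I = {0,1,2}" "j = 0" then show ?thesis using zz[OF fQ[OF fQ[OF f]], of 0 1 2] by (simp add: Qseq_vals Qseq_vals')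
  next
    assume "I = {0,1,2}" "j = 1"
    have "Qop p 1 (Qop p 0 (Qop p 1 (Qop p 2 f))) = - Qop p 0 (Qop p 1 (Qop p 1 (Qop p 2 f)))" by (rule a01[OF fQ[OF fQ[OF f]]])
    also have "Qop p 1 (Qop p 1 (Qop p 2 f)) = 0" by (rule zz[OF fQ[OF f]])
    also have "Qop p 0 (0::mon \<Rightarrow> 'a) = 0" by (rule z)
    also have "- (0::mon \<Rightarrow> 'a) = 0" by (rule minus_zero)
    finally show ?thesis using \<open>I = {0,1,2}\<close> \<open>j = 1\<close> by (simp add: Qseq_vals Qseq_vals' z)
  qed
qed

lemma S_Q: assumes "s \<in> Ssub p" "j \<le> 1" "(2::'a::idom) \<noteq> 0" shows "Qop p j (s :: mon \<Rightarrow> 'a) \<in> Ssub p"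
proof -
  have "fs s \<and> Qop p j s \<in> module.span smul (GS p)"
  proof (rule islin_span[OF islin_Qop fs_GS])
    fix g :: "mon \<Rightarrow> 'a" assume g: "g \<in> GS p"
    then obtain I m where Im: "I \<subseteq> {0,1,2}" "valid_mon m" "3 \<le> mlen m" "g = Qseq p I (basis_vec m)" unfolding GS_def by blast
    from Q_Qseq[OF Im(1) assms(2) fs_basis assms(3), of p m]
    show "Qop p j g \<in> module.span smul (GS p)"
    proof (elim disjE exE conjE)
      assume h: "Qop p j (Qseq p I (basis_vec m)) = (0 :: mon \<Rightarrow> 'a)" show ?thesis by (simp only: Im(4) h) (rule span_zero')
    next
      fix I' assume I': "I' \<subseteq> {0,1,2}" and "Qop p j (Qseq p I (basis_vec m)) = (Qseq p I' (basis_vec m) :: mon \<Rightarrow> 'a)"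
      moreover have "Qseq p I' (basis_vec m) \<in> GS p" using I' Im unfolding GS_def by blast
      ultimately show ?thesis using Im(4) span_base' by simp
    next
      fix I' assume I': "I' \<subseteq> {0,1,2}" and "Qop p j (Qseq p I (basis_vec m)) = - (Qseq p I' (basis_vec m) :: mon \<Rightarrow> 'a)"
      moreover have "Qseq p I' (basis_vec m) \<in> GS p" using I' Im unfolding GS_def by blast
      ultimately show ?thesis using Im(4) span_neg'[OF span_base'] by simp
    qed
  qed (use assms(1) in \<open>unfold Ssub_GS\<close>)
  then show ?thesis by (simp add: Ssub_GS)
qed

lemma card012: assumes "I \<subseteq> {0,1,2::nat}" shows "card I \<le> 3" "card I = 3 \<Longrightarrow> I = {0,1,2}"
proof -
  have "card I \<le> card {0,1,2::nat}" by (rule card_mono) (use assms in auto)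
  then show "card I \<le> 3" by simp
  assume "card I = 3"
  then have "card I = card {0,1,2::nat}" by simp
  then show "I = {0,1,2}" using card_subset_eq[OF _ assms] by simp
qed

lemma islin_step: "islin \<Phi> \<Longrightarrow> fs x \<Longrightarrow> fs y \<Longrightarrow> \<Phi> (smul c x + y) = smul c (\<Phi> x) + \<Phi> y"
  by (simp add: islin_def)

lemma S_L0:
  assumes "s \<in> Ssub p"
  shows "\<exists>z\<in>LL 3. PP 0 s = Qop p 0 (Qop p 1 (Qop p 2 (z :: mon \<Rightarrow> 'a::comm_ring_1)))"
proof -
  let ?Q = "\<lambda>z. Qop p 0 (Qop p 1 (Qop p 2 (z :: mon \<Rightarrow> 'a)))"
  have lQ: "islin ?Q" by (rule islin_comp[OF islin_Qop islin_comp[OF islin_Qop islin_Qop]])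
  have s: "s \<in> module.span smul (GS p)" using assms by (simp add: Ssub_GS)
  have "fs s \<and> (\<exists>z\<in>LL 3. PP 0 s = ?Q z)"
  proof (rule Modules.module.span_induct_alt[OF module_smul s, of "\<lambda>s. fs s \<and> (\<exists>z\<in>LL 3. PP 0 s = ?Q z)"])
    have a: "PP 0 (0::mon \<Rightarrow> 'a) = 0" by (rule islin_zero[OF islin_PP])
    have b: "?Q 0 = 0" by (rule islin_zero[OF lQ])
    show "fs (0::mon \<Rightarrow> 'a) \<and> (\<exists>z\<in>LL 3. PP 0 0 = ?Q z)"
    proof (intro conjI bexI)
      show "PP 0 0 = ?Q 0" by (simp only: a b)
    qed simp_all
  next
    fix c and g y :: "mon \<Rightarrow> 'a" assume g: "g \<in> GS p" and y: "fs y \<and> (\<exists>z\<in>LL 3. PP 0 y = ?Q z)"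
    then obtain z where z: "z \<in> LL 3" "PP 0 y = ?Q z" by blast
    obtain I m where Im: "I \<subseteq> {0,1,2}" "valid_mon m" "3 \<le> mlen m" "g = Qseq p I (basis_vec m)" "g \<in> LL (mlen m - card I)"
      using GS_LL[OF g] by blast
    have fg: "fs g" using fs_GS[OF g] .
    have e: "PP 0 (smul c g + y) = smul c (PP 0 g) + PP 0 y"
      by (rule islin_step[OF islin_PP fg conjunct1[OF y]])
    have "\<exists>z'\<in>LL 3. PP 0 (smul c g + y) = ?Q z'"
    proof (cases "mlen m - card I = 0")
      case True
      then have "card I = 3" "mlen m = 3" using card012(1)[OF Im(1)] Im(3) by auto
      then have I: "I = {0,1,2}" using card012(2)[OF Im(1)] by simp
      have bL: "basis_vec m \<in> LL 3" using LL_basis[OF Im(2)] \<open>mlen m = 3\<close> by simp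
      have Pg: "PP 0 g = g" using PP_LL[OF Im(5), of 0] True by simp
      have gQ: "g = ?Q (basis_vec m)" by (simp only: Im(4) I Qseq_vals)
      have "PP 0 (smul c g + y) = smul c (?Q (basis_vec m)) + ?Q z" unfolding e Pg z(2) gQ[symmetric] ..
      also have "\<dots> = ?Q (smul c (basis_vec m) + z)"
        by (rule islin_step[OF lQ fs_basis LL_fs[OF z(1)], symmetric])
      finally show ?thesis by (rule bexI[OF _ LL_add[OF LL_smul[OF bL] z(1)]])
    next
      case False
      then have Pg: "PP 0 g = 0" using PP_LL[OF Im(5), of 0] by simp
      have "PP 0 (smul c g + y) = ?Q z" unfolding e Pg z(2) smul_zero(2) add_0_left ..
      then show ?thesis by (rule bexI[OF _ z(1)])
    qed
    then show "fs (smul c g + y) \<and> (\<exists>z\<in>LL 3. PP 0 (smul c g + y) = ?Q z)" using fg y by simp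
  qed
  then show ?thesis by blast
qed

lemma LL3_S: assumes "f \<in> LL 3" "I \<subseteq> {0,1,2}" shows "Qseq p I f \<in> Ssub p"
proof -
  have "Qseq p I f = (\<Sum>m\<in>supp f. smul (f m) (Qseq p I (basis_vec m)))"
    by (rule islin_expand[OF islin_Qseq LL_fs[OF assms(1)]])
  also have "\<dots> \<in> module.span smul (GS p)"
  proof (rule span_sum')
    fix m assume "m \<in> supp f"
    then have "valid_mon m" "mlen m = 3" using LL_D[OF assms(1)] by (auto simp: supp_def)
    then have vm: "valid_mon m" "3 \<le> mlen m" by simp_all
    have "Qseq p I (basis_vec m) \<in> GS p" using assms(2) vm unfolding GS_def by blast
    then show "smul (f m) (Qseq p I (basis_vec m)) \<in> module.span smul (GS p)" by (intro span_scale' span_base')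
  qed
  finally show ?thesis by (simp add: Ssub_GS)
qed

lemma dB_exists: "fs f \<Longrightarrow> \<exists>N. dB p N f"
proof -
  assume "fs f"
  then have "finite (mdeg p ` supp f)" by (simp add: fs_def)
  then obtain N where "\<forall>n\<in>mdeg p ` supp f. n < N" using finite_nat_set_iff_bounded by blast
  then show ?thesis by (auto simp: dB_def supp_def)
qed

lemma K1:
  assumes p2: "2 \<le> p" and two: "(2::'a::idom) \<noteq> 0"
    and x: "x \<in> LL 2" and S: "Qop p 0 (Qop p 1 x) \<in> Ssub p"
  shows "(x :: mon \<Rightarrow> 'a) \<in> Ssub p"
proof -
  have fx: "fs x" using LL_fs[OF x] .
  have L0: "Qop p 0 (Qop p 1 x) \<in> LL 0" using LL_Qop[OF LL_Qop[OF x, of 1 p], of 0 p] by simp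
  obtain z where z: "z \<in> LL 3" "PP 0 (Qop p 0 (Qop p 1 x)) = Qop p 0 (Qop p 1 (Qop p 2 z))"
    using S_L0[OF S] by blast
  have e1: "Qop p 0 (Qop p 1 x) = Qop p 0 (Qop p 1 (Qop p 2 z))" using z(2) PP_LL[OF L0, of 0] by simp
  have Q2L: "Qop p 2 z \<in> LL 2" using LL_Qop[OF z(1), of 2 p] by simp
  define w where "w = x - Qop p 2 z"
  have wL: "w \<in> LL 2" unfolding w_def by (rule LL_diff[OF x Q2L])
  have l01: "islin (\<lambda>f. Qop p 0 (Qop p 1 f))" by (rule islin_comp[OF islin_Qop islin_Qop])
  have "Qop p 0 (Qop p 1 w) = Qop p 0 (Qop p 1 x) - Qop p 0 (Qop p 1 (Qop p 2 z))"
    unfolding w_def using islin_diff[OF l01 fx LL_fs[OF Q2L]] by simp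
  then have "Qop p 0 (Qop p 1 w) = 0" using e1 by simp
  moreover obtain N where "dB p N w" using dB_exists[OF LL_fs[OF wL]] by blast
  ultimately obtain a b where ab: "a \<in> LL 3" "b \<in> LL 3" "w = Qop p 0 a + Qop p 1 b"
    using K1'[OF p2 two wL] by blast
  have "x = w + Qop p 2 z" unfolding w_def by simp
  also have "\<dots> \<in> Ssub p"
    using LL3_S[OF ab(1), of "{0}" p] LL3_S[OF ab(2), of "{1}" p] LL3_S[OF z(1), of "{2}" p]
    unfolding ab(3) by (simp add: Qseq_vals Qseq_vals' Ssub_GS span_add')
  finally show ?thesis .
qed

lemma K1a:
  assumes "2 \<le> p" "(2::'a::idom) \<noteq> 0" "x \<in> LL 2" "Qop p 0 x \<in> Ssub p"
  shows "(x :: mon \<Rightarrow> 'a) \<in> Ssub p"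
proof (rule K1[OF assms(1-3)])
  have "Qop p 1 (Qop p 0 x) \<in> Ssub p" by (rule S_Q[OF assms(4) _ assms(2)]) simp
  then have "- Qop p 1 (Qop p 0 x) \<in> Ssub p" unfolding Ssub_GS by (rule span_neg')
  moreover have "Qop p 0 (Qop p 1 x) = - Qop p 1 (Qop p 0 x)" by (rule QQ_anti[OF LL_fs[OF assms(3)]])
  ultimately show "Qop p 0 (Qop p 1 x) \<in> Ssub p" by simp
qed

lemma K1b:
  assumes "2 \<le> p" "(2::'a::idom) \<noteq> 0" "x \<in> LL 2" "Qop p 1 x \<in> Ssub p"
  shows "(x :: mon \<Rightarrow> 'a) \<in> Ssub p"
  by (rule K1[OF assms(1-3)]) (rule S_Q[OF assms(4) _ assms(2)], simp)


definition GW :: "nat \<Rightarrow> (mon \<Rightarrow> 'a::comm_ring_1) set" where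
  "GW p = {Qseq p I (basis_vec m) | I m. I \<subseteq> {0,1} \<and> valid_mon m \<and> mlen m = 2}"

lemma W_def': "Sprime_pre p = module.span smul (GW p \<union> Ssub p)"
  by (simp add: Sprime_pre_def GW_def)

lemma subsets01: "I \<subseteq> {0,1::nat} \<Longrightarrow> I = {} \<or> I = {0} \<or> I = {1} \<or> I = {0,1}"
proof -
  assume "I \<subseteq> {0,1}"
  then have "I \<in> Pow {0,1}" by simp
  then show ?thesis by (simp add: Pow_insert insert_commute)
qed

lemma fs_GW: "g \<in> GW p \<Longrightarrow> fs g"
  unfolding GW_def using islin_fs[OF islin_Qseq fs_basis] by blast

lemma fs_W: assumes "x \<in> Sprime_pre p" shows "fs x"
proof (rule span_fs[of "GW p \<union> Ssub p"])
  fix g assume "g \<in> GW p \<union> Ssub p" then show "fs g" using fs_GW fs_Ssub by blast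
qed (use assms in \<open>simp add: W_def'\<close>)

lemma S_W: "s \<in> Ssub p \<Longrightarrow> s \<in> Sprime_pre p"
  unfolding W_def' by (rule span_base') simp

lemma LL2_W: assumes "f \<in> LL 2" "I \<subseteq> {0,1}" shows "Qseq p I f \<in> Sprime_pre p"
proof -
  have "Qseq p I f = (\<Sum>m\<in>supp f. smul (f m) (Qseq p I (basis_vec m)))"
    by (rule islin_expand[OF islin_Qseq LL_fs[OF assms(1)]])
  also have "\<dots> \<in> module.span smul (GW p \<union> Ssub p)"
  proof (rule span_sum')
    fix m assume "m \<in> supp f"
    then have vm: "valid_mon m" "mlen m = 2" using LL_D[OF assms(1)] by (auto simp: supp_def)
    have "(Qseq p I (basis_vec m) :: mon \<Rightarrow> 'a) \<in> GW p" using assms(2) vm unfolding GW_def by blast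
    then show "smul (f m) (Qseq p I (basis_vec m)) \<in> module.span smul (GW p \<union> Ssub p)"
      by (intro span_scale' span_base') simp
  qed
  finally show ?thesis by (simp add: W_def')
qed

lemma rearr:
  fixes g s a b c d :: "'b::ab_group_add"
  shows "g + (s + a + b + c + d) = (g + s) + a + b + c + d"
    "g + (s + a + b + c + d) = s + (g + a) + b + c + d"
    "g + (s + a + b + c + d) = s + a + (g + b) + c + d"
    "g + (s + a + b + c + d) = s + a + b + (g + c) + d"
    "g + (s + a + b + c + d) = s + a + b + c + (g + d)"
  by (simp_all add: algebra_simps)

lemma W_rep:
  assumes "x \<in> Sprime_pre p"
  shows "\<exists>s a b c d. s \<in> Ssub p \<and> a \<in> LL 2 \<and> b \<in> LL 2 \<and> c \<in> LL 2 \<and> d \<in> LL 2 \<and>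
     x = s + a + Qop p 0 b + Qop p 1 c + Qop p 0 (Qop p 1 (d :: mon \<Rightarrow> 'a::comm_ring_1))"
proof -
  let ?R = "\<lambda>x. \<exists>s a b c d. s \<in> Ssub p \<and> a \<in> LL 2 \<and> b \<in> LL 2 \<and> c \<in> LL 2 \<and> d \<in> LL 2 \<and>
     x = s + a + Qop p 0 b + Qop p 1 c + Qop p 0 (Qop p 1 (d :: mon \<Rightarrow> 'a))"
  have l0: "islin (Qop p 0 :: (mon \<Rightarrow> 'a) \<Rightarrow> _)" "islin (Qop p 1 :: (mon \<Rightarrow> 'a) \<Rightarrow> _)" by (rule islin_Qop)+
  have l01: "islin (\<lambda>f. Qop p 0 (Qop p 1 (f :: mon \<Rightarrow> 'a)))" by (rule islin_comp[OF islin_Qop islin_Qop])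
  have x: "x \<in> module.span smul (GW p \<union> Ssub p)" using assms by (simp add: W_def')
  show ?thesis
  proof (rule Modules.module.span_induct_alt[OF module_smul x, of ?R])
    have z: "Qop p j (0::mon \<Rightarrow> 'a) = 0" for j by (rule islin_zero[OF islin_Qop])
    have "(0::mon \<Rightarrow> 'a) = 0 + 0 + Qop p 0 0 + Qop p 1 0 + Qop p 0 (Qop p 1 0)" by (simp only: z add_0_left)
    then show "?R 0" using span_zero'[of "GS p"] by (intro exI[of _ 0]) (simp add: Ssub_GS)
  next
    fix k and g y :: "mon \<Rightarrow> 'a" assume g: "g \<in> GW p \<union> Ssub p" and y: "?R y"
    from y obtain s a b c d where sabcd: "s \<in> Ssub p" "a \<in> LL 2" "b \<in> LL 2" "c \<in> LL 2" "d \<in> LL 2"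
      "y = s + a + Qop p 0 b + Qop p 1 c + Qop p 0 (Qop p 1 d)" by blast
    have fb: "fs b" "fs c" "fs d" using sabcd LL_fs by auto
    show "?R (smul k g + y)"
    proof (cases "g \<in> Ssub p")
      case True
      have "smul k g + s \<in> Ssub p" using True sabcd(1) unfolding Ssub_GS by (intro span_add' span_scale')
      then show ?thesis using sabcd rearr(1)[of "smul k g"] by blast
    next
      case False
      then have "g \<in> GW p" using g by blast
      then obtain I m where Im: "I \<subseteq> {0,1}" "valid_mon m" "mlen m = 2" "g = Qseq p I (basis_vec m)"
        unfolding GW_def by blast
      define bm where "bm = smul k (basis_vec m :: mon \<Rightarrow> 'a)"
      have bmL: "bm \<in> LL 2" unfolding bm_def by (rule LL_smul[OF LL_basis[OF Im(2,3)]])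
      have fbm: "fs bm" using LL_fs[OF bmL] .
      have kg: "smul k g = Qseq p I bm" unfolding Im(4) bm_def by (rule islin_smul[OF islin_Qseq fs_basis, symmetric])
      from subsets01[OF Im(1)] show ?thesis
      proof (elim disjE)
        assume "I = {}"
        then have "smul k g = bm" using kg by (simp add: Qseq_vals Qseq_vals')
        then show ?thesis using sabcd rearr(2)[of "smul k g"] LL_add[OF bmL sabcd(2)] by metis
      next
        assume "I = {0}"
        then have "smul k g = Qop p 0 bm" using kg by (simp add: Qseq_vals Qseq_vals')
        moreover have "Qop p 0 bm + Qop p 0 b = Qop p 0 (bm + b)" by (rule islin_add[OF islin_Qop fbm fb(1), symmetric])
        ultimately show ?thesis using sabcd rearr(3)[of "smul k g"] LL_add[OF bmL sabcd(3)] by metis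
      next
        assume "I = {1}"
        then have "smul k g = Qop p 1 bm" using kg by (simp add: Qseq_vals Qseq_vals')
        moreover have "Qop p 1 bm + Qop p 1 c = Qop p 1 (bm + c)" by (rule islin_add[OF islin_Qop fbm fb(2), symmetric])
        ultimately show ?thesis using sabcd rearr(4)[of "smul k g"] LL_add[OF bmL sabcd(4)] by metis
      next
        assume "I = {0,1}"
        then have "smul k g = Qop p 0 (Qop p 1 bm)" using kg by (simp add: Qseq_vals Qseq_vals')
        moreover have "Qop p 0 (Qop p 1 bm) + Qop p 0 (Qop p 1 d) = Qop p 0 (Qop p 1 (bm + d))"
          by (rule islin_add[OF l01 fbm fb(3), symmetric])
        ultimately show ?thesis using sabcd rearr(5)[of "smul k g"] LL_add[OF bmL sabcd(5)] by metis
      qed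
    qed
  qed
qed


lemma islin_add5: assumes "islin \<Phi>" "fs s" "fs a" "fs b" "fs c" "fs d"
  shows "\<Phi> (s + a + b + c + d) = \<Phi> s + \<Phi> a + \<Phi> b + \<Phi> c + \<Phi> d"
  using assms by (simp only: islin_add[OF assms(1)] fs_add)

lemma gen:
  fixes X x s a b c d B C D :: "'b::ab_group_add"
  shows "X = s + a + 0 + c + 0 \<Longrightarrow> X - s = a + c"
    "x = s + a + B + C + D \<Longrightarrow> x - (B + D) = s + a + C"
    "X = s + a + b + 0 + 0 \<Longrightarrow> X - s = a + b"
    "x = s + a + B + C + D \<Longrightarrow> x - (C - - D) = s + a + B"
    "0 + c = c" "a + 0 = a" "- (- a) = a"
  by (simp_all add: algebra_simps)

lemma PP_add: "fs f \<Longrightarrow> fs g \<Longrightarrow> PP k (f + g) = PP k f + PP k g"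
  by (rule islin_add[OF islin_PP])

lemma margolis0:
  fixes x :: "mon \<Rightarrow> 'a::idom"
  assumes p2: "2 \<le> p" and two: "(2::'a) \<noteq> 0"
    and x: "x \<in> Sprime_pre p" and Qx: "Qop p 0 x \<in> Ssub p"
  shows "\<exists>y\<in>Sprime_pre p. x - Qop p 0 y \<in> Ssub p"
proof -
  obtain s a b c d where sabcd: "s \<in> Ssub p" "a \<in> LL 2" "b \<in> LL 2" "c \<in> LL 2" "d \<in> LL 2"
      "x = s + a + Qop p 0 b + Qop p 1 c + Qop p 0 (Qop p 1 (d :: mon \<Rightarrow> 'a))"
    using W_rep[OF x] by blast
  have fs: "fs s" using fs_Ssub[OF sabcd(1)] .
  have fa: "fs a" "fs b" "fs c" "fs d" using sabcd LL_fs by auto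
  have fQ: "fs (Qop p j f)" if "fs f" for j and f :: "mon \<Rightarrow> 'a" using islin_fs[OF islin_Qop that] .
  have "Qop p 0 x = Qop p 0 s + Qop p 0 a + Qop p 0 (Qop p 0 b) + Qop p 0 (Qop p 1 c) + Qop p 0 (Qop p 0 (Qop p 1 d))"
    unfolding sabcd(6) by (rule islin_add5[OF islin_Qop fs fa(1) fQ[OF fa(2)] fQ[OF fa(3)] fQ[OF fQ[OF fa(4)]]])
  also have "Qop p 0 (Qop p 0 b) = 0" by (rule QQ_zero[OF fa(2) two])
  also have "Qop p 0 (Qop p 0 (Qop p 1 d)) = 0" by (rule QQ_zero[OF fQ[OF fa(4)] two])
  finally have "Qop p 0 x - Qop p 0 s = Qop p 0 a + Qop p 0 (Qop p 1 c)" by (rule gen(1))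
  moreover have "Qop p 0 x - Qop p 0 s \<in> Ssub p" using Qx S_Q[OF sabcd(1) _ two, of 0] unfolding Ssub_GS by (intro span_diff') auto
  ultimately have u: "Qop p 0 a + Qop p 0 (Qop p 1 c) \<in> Ssub p" by simp
  have L1: "Qop p 0 a \<in> LL 1" using LL_Qop[OF sabcd(2), of 0 p] by simp
  have L0: "Qop p 0 (Qop p 1 c) \<in> LL 0" using LL_Qop[OF LL_Qop[OF sabcd(4), of 1 p], of 0 p] by simp
  have "PP 1 (Qop p 0 a + Qop p 0 (Qop p 1 c)) = Qop p 0 a + 0"
    unfolding PP_add[OF LL_fs[OF L1] LL_fs[OF L0]] PP_LL[OF L1] PP_LL[OF L0] by simp
  then have Sa: "Qop p 0 a \<in> Ssub p" using S_PP[OF u, of 1] by (simp only: gen(6))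
  have "PP 0 (Qop p 0 a + Qop p 0 (Qop p 1 c)) = 0 + Qop p 0 (Qop p 1 c)"
    unfolding PP_add[OF LL_fs[OF L1] LL_fs[OF L0]] PP_LL[OF L1] PP_LL[OF L0] by simp
  then have Sc: "Qop p 0 (Qop p 1 c) \<in> Ssub p" using S_PP[OF u, of 0] by (simp only: gen(5))
  have aS: "a \<in> Ssub p" by (rule K1a[OF p2 two sabcd(2) Sa])
  have cS: "c \<in> Ssub p" by (rule K1[OF p2 two sabcd(4) Sc])
  define y where "y = b + Qop p 1 d"
  have yW: "y \<in> Sprime_pre p"
    using LL2_W[OF sabcd(3), of "{}" p] LL2_W[OF sabcd(5), of "{1}" p] unfolding y_def
    by (simp add: Qseq_vals Qseq_vals' W_def' span_add')
  have "Qop p 0 y = Qop p 0 b + Qop p 0 (Qop p 1 d)" unfolding y_def by (rule islin_add[OF islin_Qop fa(2) fQ[OF fa(4)]])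
  then have "x - Qop p 0 y = s + a + Qop p 1 c" using gen(2)[OF sabcd(6)] by simp
  also have "\<dots> \<in> Ssub p" using sabcd(1) aS S_Q[OF cS _ two, of 1] unfolding Ssub_GS by (intro span_add') auto
  finally show ?thesis using yW by blast
qed

lemma margolis1:
  fixes x :: "mon \<Rightarrow> 'a::idom"
  assumes p2: "2 \<le> p" and two: "(2::'a) \<noteq> 0"
    and x: "x \<in> Sprime_pre p" and Qx: "Qop p 1 x \<in> Ssub p"
  shows "\<exists>y\<in>Sprime_pre p. x - Qop p 1 y \<in> Ssub p"
proof -
  obtain s a b c d where sabcd: "s \<in> Ssub p" "a \<in> LL 2" "b \<in> LL 2" "c \<in> LL 2" "d \<in> LL 2"
      "x = s + a + Qop p 0 b + Qop p 1 c + Qop p 0 (Qop p 1 (d :: mon \<Rightarrow> 'a))"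
    using W_rep[OF x] by blast
  have fs: "fs s" using fs_Ssub[OF sabcd(1)] .
  have fa: "fs a" "fs b" "fs c" "fs d" using sabcd LL_fs by auto
  have fQ: "fs (Qop p j f)" if "fs f" for j and f :: "mon \<Rightarrow> 'a" using islin_fs[OF islin_Qop that] .
  have "Qop p 1 x = Qop p 1 s + Qop p 1 a + Qop p 1 (Qop p 0 b) + Qop p 1 (Qop p 1 c) + Qop p 1 (Qop p 0 (Qop p 1 d))"
    unfolding sabcd(6) by (rule islin_add5[OF islin_Qop fs fa(1) fQ[OF fa(2)] fQ[OF fa(3)] fQ[OF fQ[OF fa(4)]]])
  also have "Qop p 1 (Qop p 0 b) = - Qop p 0 (Qop p 1 b)" by (rule QQ_anti[OF fa(2)])
  also have "Qop p 1 (Qop p 1 c) = 0" by (rule QQ_zero[OF fa(3) two])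
  also have "Qop p 1 (Qop p 0 (Qop p 1 d)) = - Qop p 0 (Qop p 1 (Qop p 1 d))" by (rule QQ_anti[OF fQ[OF fa(4)]])
  also have "Qop p 1 (Qop p 1 d) = 0" by (rule QQ_zero[OF fa(4) two])
  also have "Qop p 0 (0 :: mon \<Rightarrow> 'a) = 0" by (rule islin_zero[OF islin_Qop])
  also have "- (0 :: mon \<Rightarrow> 'a) = 0" by (rule minus_zero)
  finally have "Qop p 1 x - Qop p 1 s = Qop p 1 a + - Qop p 0 (Qop p 1 b)" by (rule gen(3))
  moreover have "Qop p 1 x - Qop p 1 s \<in> Ssub p" using Qx S_Q[OF sabcd(1) _ two, of 1] unfolding Ssub_GS by (intro span_diff') auto
  ultimately have u: "Qop p 1 a + - Qop p 0 (Qop p 1 b) \<in> Ssub p" by simp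
  have L1: "Qop p 1 a \<in> LL 1" using LL_Qop[OF sabcd(2), of 1 p] by simp
  have L0: "- Qop p 0 (Qop p 1 b) \<in> LL 0" using LL_neg[OF LL_Qop[OF LL_Qop[OF sabcd(3), of 1 p], of 0 p]] by simp
  have "PP 1 (Qop p 1 a + - Qop p 0 (Qop p 1 b)) = Qop p 1 a + 0"
    unfolding PP_add[OF LL_fs[OF L1] LL_fs[OF L0]] PP_LL[OF L1] PP_LL[OF L0] by simp
  then have Sa: "Qop p 1 a \<in> Ssub p" using S_PP[OF u, of 1] by (simp only: gen(6))
  have "PP 0 (Qop p 1 a + - Qop p 0 (Qop p 1 b)) = 0 + - Qop p 0 (Qop p 1 b)"
    unfolding PP_add[OF LL_fs[OF L1] LL_fs[OF L0]] PP_LL[OF L1] PP_LL[OF L0] by simp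
  then have "- Qop p 0 (Qop p 1 b) \<in> Ssub p" using S_PP[OF u, of 0] by (simp only: gen(5))
  then have "- (- Qop p 0 (Qop p 1 b)) \<in> Ssub p" unfolding Ssub_GS by (rule span_neg')
  then have Sb: "Qop p 0 (Qop p 1 b) \<in> Ssub p" by (simp only: gen(7))
  have aS: "a \<in> Ssub p" by (rule K1b[OF p2 two sabcd(2) Sa])
  have bS: "b \<in> Ssub p" by (rule K1[OF p2 two sabcd(3) Sb])
  define y where "y = c - Qop p 0 d"
  have yW: "y \<in> Sprime_pre p"
    using LL2_W[OF sabcd(4), of "{}" p] LL2_W[OF sabcd(5), of "{0}" p] unfolding y_def
    by (simp add: Qseq_vals W_def' span_diff')
  have "Qop p 1 y = Qop p 1 c - Qop p 1 (Qop p 0 d)" unfolding y_def by (rule islin_diff[OF islin_Qop fa(3) fQ[OF fa(4)]])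
  also have "Qop p 1 (Qop p 0 d) = - Qop p 0 (Qop p 1 d)" by (rule QQ_anti[OF fa(4)])
  finally have e: "Qop p 1 y = Qop p 1 c - - Qop p 0 (Qop p 1 d)" .
  have "x - Qop p 1 y = s + a + Qop p 0 b" unfolding e by (rule gen(4)[OF sabcd(6)])
  also have "\<dots> \<in> Ssub p" using sabcd(1) aS S_Q[OF bS _ two, of 0] unfolding Ssub_GS by (intro span_add') auto
  finally show ?thesis using yW by blast
qed


abbreviation indep :: "(mon \<Rightarrow> 'a::comm_ring_1) set \<Rightarrow> bool" where
  "indep A \<equiv> \<not> Modules.module.dependent smul A"

lemma span_disj_zero:
  assumes ind: "indep (A \<union> C)" and dis: "A \<inter> C = {}"
    and uA: "u \<in> module.span smul A" and uC: "u \<in> module.span smul C"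
  shows "u = (0 :: mon \<Rightarrow> 'a::comm_ring_1)"
proof -
  obtain t1 r1 where t1: "u = (\<Sum>v\<in>t1. smul (r1 v) v)" "finite t1" "t1 \<subseteq> A"
    using uA unfolding Modules.module.span_explicit[OF module_smul] by blast
  obtain t2 r2 where t2: "u = (\<Sum>v\<in>t2. smul (r2 v) v)" "finite t2" "t2 \<subseteq> C"
    using uC unfolding Modules.module.span_explicit[OF module_smul] by blast
  define w where "w v = (if v \<in> t1 then r1 v else - r2 v)" for v
  have d: "t1 \<inter> t2 = {}" using t1(3) t2(3) dis by blast
  have "(\<Sum>v\<in>t1 \<union> t2. smul (w v) v) = (\<Sum>v\<in>t1. smul (w v) v) + (\<Sum>v\<in>t2. smul (w v) v)"
    by (rule sum.union_disjoint[OF t1(2) t2(2) d])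
  also have "(\<Sum>v\<in>t1. smul (w v) v) = u" unfolding t1(1) w_def by (rule sum.cong) auto
  also have "(\<Sum>v\<in>t2. smul (w v) v) = (\<Sum>v\<in>t2. - smul (r2 v) v)"
    unfolding w_def using d by (intro sum.cong refl) (auto simp: smul_neg)
  also have "\<dots> = - u" unfolding t2(1) by (rule sum_negf)
  also have "u + - u = 0" by (rule right_minus)
  finally have z: "(\<Sum>v\<in>t1 \<union> t2. smul (w v) v) = 0" .
  have "r1 v = 0" if "v \<in> t1" for v
  proof -
    have "w v = 0"
      by (rule Modules.module.independentD[OF module_smul ind _ _ z]) (use t1 t2 that in auto)
    then show ?thesis using that by (simp add: w_def)
  qed
  then show ?thesis unfolding t1(1) by simp
qed

lemma QseqS: assumes "s \<in> Ssub p" "I \<subseteq> {0,1}" "(2::'a::idom) \<noteq> 0" shows "Qseq p I (s :: mon \<Rightarrow> 'a) \<in> Ssub p"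
proof -
  have q: "Qop p j t \<in> Ssub p" if "t \<in> Ssub p" "j \<le> 1" for j and t :: "mon \<Rightarrow> 'a" by (rule S_Q[OF that assms(3)])
  from subsets01[OF assms(2)] show ?thesis
    by (elim disjE) (use assms(1) q in \<open>simp_all add: Qseq_vals Qseq_vals'\<close>)
qed

lemma homog_basis: "homogeneous p (basis_vec m :: mon \<Rightarrow> 'a::comm_ring_1)"
  unfolding homogeneous_def by (rule exI[of _ "mdeg p m"]) (simp add: basis_vec_def)

lemma sum4: "(\<Sum>y\<in>{{},{0},{1},{0,1::nat}}. G y) = G {} + G {0} + G {1} + (G {0,1} :: 'b::comm_monoid_add)"
  by (simp add: add.assoc)

lemma gen4:
  fixes a b c d :: "'b::ab_group_add"
  shows "a + 0 + 0 + 0 = a" "0 + b + c + 0 = b + c" "0 + 0 + 0 + d = d" "0 + d = d" "(b + c) - c = b"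
  by simp_all


lemma E1:
  assumes p2: "2 \<le> p" and two: "(2::'a::field) \<noteq> 0"
  shows "E1_free p (Sprime_pre p :: (mon \<Rightarrow> 'a) set) (Ssub p)"
proof -
  define S2 where "S2 = ({s \<in> Ssub p. s \<in> LL 2} :: (mon \<Rightarrow> 'a) set)"
  obtain BS where BS: "BS \<subseteq> S2" "indep BS" "S2 \<subseteq> module.span smul BS"
    by (rule Vector_Spaces.vector_space.maximal_independent_subset[OF vs_smul, of S2]) blast
  define E2 where "E2 = ({basis_vec m | m. valid_mon m \<and> mlen m = 2} :: (mon \<Rightarrow> 'a) set)"
  obtain B' where B': "BS \<subseteq> B'" "B' \<subseteq> BS \<union> E2" "indep B'" "BS \<union> E2 \<subseteq> module.span smul B'"
    by (rule Vector_Spaces.vector_space.maximal_independent_subset_extend[OF vs_smul, of BS "BS \<union> E2"])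
       (use BS(2) in auto)
  define B where "B = B' - BS"
  have BE2: "B \<subseteq> E2" using B'(2) by (auto simp: B_def)
  have BB': "B \<union> BS = B'" "B \<inter> BS = {}" using B'(1) by (auto simp: B_def)
  have E2L: "v \<in> LL 2" if "v \<in> E2" for v using that LL_basis unfolding E2_def by blast
  have BL: "b \<in> LL 2" if "b \<in> B" for b using E2L BE2 that by blast
  have BSS: "v \<in> Ssub p" if "v \<in> BS" for v using BS(1) that by (auto simp: S2_def)
  have fB': "fs v" if "v \<in> B'" for v
    using that B'(2) E2L BSS LL_fs fs_Ssub by blast
  have L2B': "f \<in> module.span smul B'" if "f \<in> LL 2" for f
  proof -
    have "f = (\<Sum>m\<in>supp f. smul (f m) (basis_vec m))" by (rule fs_expand[OF LL_fs[OF that]])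
    also have "\<dots> \<in> module.span smul B'"
    proof (rule span_sum')
      fix m assume "m \<in> supp f"
      then have vm: "valid_mon m \<and> mlen m = 2" using LL_D[OF that, of m] by (simp add: supp_def)
      then have "basis_vec m \<in> E2" unfolding E2_def by blast
      then show "smul (f m) (basis_vec m) \<in> module.span smul B'" using B'(4) by (intro span_scale') blast
    qed
    finally show ?thesis .
  qed
  define QB where "QB = {Qseq p I b | I b. I \<subseteq> {0,1} \<and> b \<in> B}"
  have Qspan: "Qseq p I f \<in> module.span smul (QB \<union> Ssub p)" if "f \<in> LL 2" "I \<subseteq> {0,1}" for f I
  proof -
    have "fs f \<and> Qseq p I f \<in> module.span smul (QB \<union> Ssub p)"
    proof (rule islin_span[OF islin_Qseq fB' _ L2B'[OF that(1)]])
      fix v assume v: "v \<in> B'"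
      show "Qseq p I v \<in> module.span smul (QB \<union> Ssub p)"
      proof (cases "v \<in> BS")
        case True
        then have "Qseq p I v \<in> Ssub p" by (intro QseqS[OF BSS that(2) two])
        then show ?thesis by (intro span_base') blast
      next
        case False
        then have "v \<in> B" using v by (simp add: B_def)
        then have "Qseq p I v \<in> QB" using that(2) unfolding QB_def by blast
        then show ?thesis by (intro span_base') blast
      qed
    qed
    then show ?thesis by blast
  qed
  show ?thesis unfolding E1_free_def
  proof (intro exI[of _ B] conjI ballI allI impI subsetI)
    fix b assume "b \<in> B"
    then obtain m where "b = basis_vec m" "valid_mon m" "mlen m = 2" using BE2 unfolding E2_def by blast
    then show "b \<in> Sprime_pre p" using LL2_W[OF LL_basis[OF \<open>valid_mon m\<close> \<open>mlen m = 2\<close>], of "{}" p] by (simp add: Qseq_vals Qseq_vals')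
  next
    fix b assume "b \<in> B"
    then obtain m where "b = basis_vec m" using BE2 unfolding E2_def by blast
    then show "homogeneous p b" by (simp add: homog_basis)
  next
    fix x :: "mon \<Rightarrow> 'a" assume "x \<in> Sprime_pre p"
    from W_rep[OF this] obtain s a b c d where sabcd: "s \<in> Ssub p" "a \<in> LL 2" "b \<in> LL 2" "c \<in> LL 2" "d \<in> LL 2"
      "x = s + a + Qop p 0 b + Qop p 1 c + Qop p 0 (Qop p 1 (d :: mon \<Rightarrow> 'a))" by blast
    have "s \<in> module.span smul (QB \<union> Ssub p)" using sabcd(1) by (intro span_base') blast
    moreover have "a \<in> module.span smul (QB \<union> Ssub p)" using Qspan[OF sabcd(2), of "{}"] by (simp add: Qseq_vals Qseq_vals')
    moreover have "Qop p 0 b \<in> module.span smul (QB \<union> Ssub p)" using Qspan[OF sabcd(3), of "{0}"] by (simp add: Qseq_vals Qseq_vals')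
    moreover have "Qop p 1 c \<in> module.span smul (QB \<union> Ssub p)" using Qspan[OF sabcd(4), of "{1}"] by (simp add: Qseq_vals Qseq_vals')
    moreover have "Qop p 0 (Qop p 1 d) \<in> module.span smul (QB \<union> Ssub p)" using Qspan[OF sabcd(5), of "{0,1}"] by (simp add: Qseq_vals Qseq_vals')
    ultimately show "x \<in> module.span smul ({Qseq p I b |I b. I \<subseteq> {0, 1} \<and> b \<in> B} \<union> Ssub p)"
      unfolding sabcd(6) QB_def[symmetric] by (intro span_add')
  next
    fix c F x
    assume A: "finite F \<and> F \<subseteq> B \<times> Pow {0, 1} \<and> (\<Sum>(b, I)\<in>F. smul (c (b, I)) (Qseq p I b)) \<in> Ssub p"
      and xF: "x \<in> F"
    have fF: "finite F" and FB: "F \<subseteq> B \<times> Pow {0,1}" using A by auto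
    define T where "T = {{},{0},{1},{0,1::nat}}"
    have fT: "finite T" by (simp add: T_def)
    have sT: "snd ` F \<subseteq> T" using FB subsets01 unfolding T_def by fastforce
    define FJ where "FJ J = {y \<in> F. snd y = J}" for J
    define u where "u J = (\<Sum>y\<in>FJ J. smul (c y) (fst y))" for J
    have fst_B: "fst y \<in> B" if "y \<in> F" for y using FB that by auto
    have uL: "u J \<in> LL 2" for J unfolding u_def by (intro LL_sum LL_smul BL fst_B) (auto simp: FJ_def)
    have uB: "u J \<in> module.span smul B" for J unfolding u_def
      by (intro span_sum' span_scale' span_base' fst_B) (auto simp: FJ_def)
    have grp: "(\<Sum>y\<in>FJ J. smul (c y) (Qseq p (snd y) (fst y))) = Qseq p J (u J)" for J
    proof -
      have "(\<Sum>y\<in>FJ J. smul (c y) (Qseq p (snd y) (fst y))) = (\<Sum>y\<in>FJ J. Qseq p J (smul (c y) (fst y)))"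
        by (rule sum.cong[OF refl]) (auto simp: FJ_def islin_smul[OF islin_Qseq] LL_fs[OF BL[OF fst_B]])
      also have "\<dots> = Qseq p J (u J)" unfolding u_def
        by (rule islin_sum[OF islin_Qseq, symmetric]) (auto simp: FJ_def intro!: fs_smul LL_fs[OF BL[OF fst_B]])
      finally show ?thesis .
    qed
    have "(\<Sum>(b, I)\<in>F. smul (c (b, I)) (Qseq p I b)) = (\<Sum>y\<in>F. smul (c y) (Qseq p (snd y) (fst y)))"
      by (rule sum.cong) (auto split: prod.split)
    also have "\<dots> = (\<Sum>J\<in>T. \<Sum>y\<in>FJ J. smul (c y) (Qseq p (snd y) (fst y)))"
      unfolding FJ_def by (rule sum.group[OF fF fT sT, symmetric])
    also have "\<dots> = (\<Sum>J\<in>T. Qseq p J (u J))" by (simp only: grp)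
    also have "\<dots> = Qseq p {} (u {}) + Qseq p {0} (u {0}) + Qseq p {1} (u {1}) + Qseq p {0,1} (u {0,1})"
      unfolding T_def by (rule sum4)
    also have "\<dots> = u {} + Qop p 0 (u {0}) + Qop p 1 (u {1}) + Qop p 0 (Qop p 1 (u {0,1}))"
      by (simp only: Qseq_vals)
    finally have TS: "u {} + Qop p 0 (u {0}) + Qop p 1 (u {1}) + Qop p 0 (Qop p 1 (u {0,1})) \<in> Ssub p" using A by simp
    have L1a: "Qop p 0 (u {0}) \<in> LL 1" using LL_Qop[OF uL, of 0 p] by simp
    have L1b: "Qop p 1 (u {1}) \<in> LL 1" using LL_Qop[OF uL, of 1 p] by simp
    have L0: "Qop p 0 (Qop p 1 (u {0,1})) \<in> LL 0" using LL_Qop[OF LL_Qop[OF uL, of 1 p], of 0 p] by simp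
    have fu: "fs (u J)" for J using LL_fs[OF uL] .
    note f1 = LL_fs[OF L1a] LL_fs[OF L1b] LL_fs[OF L0]
    have PPs: "PP k (u {} + Qop p 0 (u {0}) + Qop p 1 (u {1}) + Qop p 0 (Qop p 1 (u {0,1})))
        = PP k (u {}) + PP k (Qop p 0 (u {0})) + PP k (Qop p 1 (u {1})) + PP k (Qop p 0 (Qop p 1 (u {0,1})))" for k
      using fu f1 by (simp only: PP_add fs_add)
    have S0: "u {} \<in> Ssub p"
      using S_PP[OF TS, of 2] unfolding PPs PP_LL[OF uL] PP_LL[OF L1a] PP_LL[OF L1b] PP_LL[OF L0] by (simp only: if_True if_False simp_thms gen4 numeral_eq_iff) simp
    have S1: "Qop p 0 (u {0}) + Qop p 1 (u {1}) \<in> Ssub p"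
      using S_PP[OF TS, of 1] unfolding PPs PP_LL[OF uL] PP_LL[OF L1a] PP_LL[OF L1b] PP_LL[OF L0] by simp
    have S3': "Qop p 0 (Qop p 1 (u {0,1})) \<in> Ssub p"
      using S_PP[OF TS, of 0] unfolding PPs PP_LL[OF uL] PP_LL[OF L1a] PP_LL[OF L1b] PP_LL[OF L0] by simp
    have S3: "u {0,1} \<in> Ssub p" by (rule K1[OF p2 two uL S3'])
    have "Qop p 0 (Qop p 0 (u {0}) + Qop p 1 (u {1})) \<in> Ssub p" by (rule S_Q[OF S1 _ two]) simp
    also have "Qop p 0 (Qop p 0 (u {0}) + Qop p 1 (u {1})) = Qop p 0 (Qop p 0 (u {0})) + Qop p 0 (Qop p 1 (u {1}))"
      by (rule islin_add[OF islin_Qop f1(1,2)])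
    also have "Qop p 0 (Qop p 0 (u {0})) = 0" by (rule QQ_zero[OF fu two])
    finally have S2': "Qop p 0 (Qop p 1 (u {1})) \<in> Ssub p" by (simp only: gen4)
    have S2: "u {1} \<in> Ssub p" by (rule K1[OF p2 two uL S2'])
    have "Qop p 0 (u {0}) + Qop p 1 (u {1}) - Qop p 1 (u {1}) \<in> Ssub p"
      using S1 S_Q[OF S2 _ two, of 1] unfolding Ssub_GS by (intro span_diff') auto
    then have S1': "Qop p 0 (u {0}) \<in> Ssub p" by (simp only: gen4)
    have S1: "u {0} \<in> Ssub p" by (rule K1a[OF p2 two uL S1'])
    have uz: "u J = 0" if "J \<in> T" for J
    proof -
      have "u J \<in> Ssub p" using that S0 S1 S2 S3 by (auto simp: T_def)
      then have "u J \<in> S2" using uL by (simp add: S2_def)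
      then have "u J \<in> module.span smul BS" using BS(3) by blast
      then show ?thesis using span_disj_zero[OF _ BB'(2) uB] B'(3) BB'(1) by simp
    qed
    define J where "J = snd x"
    have JT: "J \<in> T" using sT xF by (auto simp: J_def)
    have inj: "inj_on fst (FJ J)" unfolding FJ_def inj_on_def by (auto simp: prod_eq_iff)
    have "(\<Sum>b\<in>fst ` FJ J. smul (c (b, J)) b) = (\<Sum>y\<in>FJ J. smul (c (fst y, J)) (fst y))"
      by (simp add: sum.reindex[OF inj] o_def)
    also have "\<dots> = u J" unfolding u_def by (rule sum.cong) (auto simp: FJ_def)
    also have "\<dots> = 0" by (rule uz[OF JT])
    finally have z: "(\<Sum>b\<in>fst ` FJ J. smul (c (b, J)) b) = 0" .
    have "c (fst x, J) = 0"
    proof (rule Modules.module.independentD[OF module_smul B'(3) _ _ z])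
      show "finite (fst ` FJ J)" using fF by (simp add: FJ_def)
      show "fst ` FJ J \<subseteq> B'" using fst_B B_def by (auto simp: FJ_def)
      show "fst x \<in> fst ` FJ J" using xF by (auto simp: FJ_def J_def)
    qed
    then show "c x = 0" by (simp add: J_def)
  qed
qed


lemma two_nz: assumes "CARD('p::prime_card) \<noteq> 2" shows "(2::'p mod_ring) \<noteq> 0"
proof -
  have pr: "prime (CARD('p))" by (rule prime_card)
  then have "2 \<le> CARD('p)" by (rule prime_ge_2_nat)
  with assms have c3: "3 \<le> CARD('p)" by simp
  have "(2::'p mod_ring) = of_nat 2" by simp
  also have "of_nat 2 \<noteq> (0::'p mod_ring)"
    unfolding of_nat_of_int_mod_ring o_def
    using c3 by transfer auto
  finally show ?thesis .
qed

theorem mainTheorem4: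
  assumes "CARD('p::prime_card) \<noteq> 2"
  shows "margolis_trivial CARD('p) 0 (Sprime_pre CARD('p) :: (mon \<Rightarrow> 'p mod_ring) set) (Ssub CARD('p))
       \<and> margolis_trivial CARD('p) 1 (Sprime_pre CARD('p) :: (mon \<Rightarrow> 'p mod_ring) set) (Ssub CARD('p))
       \<and> E1_free CARD('p) (Sprime_pre CARD('p) :: (mon \<Rightarrow> 'p mod_ring) set) (Ssub CARD('p))"
proof -
  have p2: "2 \<le> CARD('p)" by (rule prime_ge_2_nat[OF prime_card])
  have two: "(2::'p mod_ring) \<noteq> 0" by (rule two_nz[OF assms])
  have m0: "margolis_trivial CARD('p) 0 (Sprime_pre CARD('p) :: (mon \<Rightarrow> 'p mod_ring) set) (Ssub CARD('p))"
    unfolding margolis_trivial_def using margolis0[OF p2 two] by blast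
  have m1: "margolis_trivial CARD('p) 1 (Sprime_pre CARD('p) :: (mon \<Rightarrow> 'p mod_ring) set) (Ssub CARD('p))"
    unfolding margolis_trivial_def using margolis1[OF p2 two] by blast
  have e: "E1_free CARD('p) (Sprime_pre CARD('p) :: (mon \<Rightarrow> 'p mod_ring) set) (Ssub CARD('p))"
    by (rule E1[OF p2 two])
  show ?thesis using m0 m1 e by blast
qed

end
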